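(* Let $n\ge3$ and let $(S^n,g_0)$ be the round unit sphere $S^n\subset\mathbb{R}^{n+1}$, with $x^0,\dots,x^n$ the restrictions of the standard coordinates of $\mathbb{R}^{n+1}$. Then for all $u\in C^\infty(S^n)$, \[ \sum_{i=0}^n x^i\bigl(L_{\sigma_2}(x^iu,u,u) - x^iL_{\sigma_2}(u,u,u)\bigr) = \frac{n-1}{3}\,u\,\sigma_1(u), \] where $\sigma_1(u) := -\frac{n-4}{8}\Delta u^2 - |\nabla u|^2 + \frac n2\bigl(\frac{n-4}{4}\bigr)^2u^2$.
   Context: All geometric quantities are taken with respect to $g_0$: $\nabla$ gradient, $\delta$ divergence, $d$ exterior derivative, $\Delta=\delta d$ the (nonpositive) Laplacian. $L_{\sigma_2}$ is the symmetric trilinear differential operator (the polarization) whose diagonal is \[ L_{\sigma_2}(u,u,u) = \tfrac12\delta\bigl(|\nabla u|^2du\bigr) - \tfrac{n-4}{16}\bigl(u\Delta|\nabla u|^2 - \delta((\Delta u^2)du)\bigr) - \tfrac{n-1}{4}\bigl(\tfrac{n-4}{4}\bigr)^2 u\Delta u^2 + \tfrac{n(n-1)}{8}\bigl(\tfrac{n-4}{4}\bigr)^3u^3, \] i.e. $L_{\sigma_2}(u_1,u_2,u_3)$ is trilinear, symmetric in its three arguments, and agrees with the displayed expression when $u_1=u_2=u_3=u$. *)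

theory Defs
  imports "HOL-Analysis.Analysis"
begin

text \<open>Concrete model of the round unit sphere S^n inside a Euclidean space 'a of
dimension n+1.  A function on S^n is represented by a function on 'a of which only
the values on the unit sphere matter.  Every geometric operator first extends its
argument 0-homogeneously off the sphere and then applies Euclidean calculus; at
points of the sphere this yields exactly the intrinsic operators of g_0.\<close>

definition hext :: "('a::real_normed_vector \<Rightarrow> 'b) \<Rightarrow> 'a \<Rightarrow> 'b" where
  "hext f y = f (scaleR (1 / norm y) y)"

definition dirderiv :: "'a::real_normed_vector \<Rightarrow> ('a \<Rightarrow> 'b::real_normed_vector) \<Rightarrow> 'a \<Rightarrow> 'b" where
  "dirderiv v f x = frechet_derivative f (at x) v"

definition smooth_on :: "'a::euclidean_space set \<Rightarrow> ('a \<Rightarrow> 'b::real_normed_vector) \<Rightarrow> bool" where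
  "smooth_on S f \<longleftrightarrow> (\<forall>bs. set bs \<subseteq> Basis \<longrightarrow> (foldr dirderiv bs f) differentiable_on S)"

definition smooth_sphere_fun :: "('a::euclidean_space \<Rightarrow> real) \<Rightarrow> bool" where
  "smooth_sphere_fun u \<longleftrightarrow> smooth_on (UNIV - {0}) (hext u)"

definition sgrad :: "('a::euclidean_space \<Rightarrow> real) \<Rightarrow> 'a \<Rightarrow> 'a" where
  "sgrad f x = (\<Sum>b\<in>Basis. frechet_derivative (hext f) (at x) b *\<^sub>R b)"

text \<open>Divergence with respect to g_0 of a tangent vector field (1-forms are
identified with vector fields via g_0); delta = div, so Delta = delta d = div grad.\<close>
definition sdiv :: "('a::euclidean_space \<Rightarrow> 'a) \<Rightarrow> 'a \<Rightarrow> real" where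
  "sdiv V x = (\<Sum>b\<in>Basis. frechet_derivative (hext V) (at x) b \<bullet> b)"

definition slap :: "('a::euclidean_space \<Rightarrow> real) \<Rightarrow> 'a \<Rightarrow> real" where
  "slap f = sdiv (sgrad f)"

definition Lsig2_diag :: "real \<Rightarrow> ('a::euclidean_space \<Rightarrow> real) \<Rightarrow> 'a \<Rightarrow> real" where
  "Lsig2_diag n u x =
     1/2 * sdiv (\<lambda>y. (norm (sgrad u y))\<^sup>2 *\<^sub>R sgrad u y) x
   - (n - 4) / 16 * (u x * slap (\<lambda>y. (norm (sgrad u y))\<^sup>2) x
                     - sdiv (\<lambda>y. slap (\<lambda>z. (u z)\<^sup>2) y *\<^sub>R sgrad u y) x)
   - (n - 1) / 4 * ((n - 4) / 4)\<^sup>2 * u x * slap (\<lambda>y. (u y)\<^sup>2) x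
   + n * (n - 1) / 8 * ((n - 4) / 4) ^ 3 * (u x) ^ 3"

definition Lsig2 :: "real \<Rightarrow> ('a::euclidean_space \<Rightarrow> real) \<Rightarrow> ('a \<Rightarrow> real) \<Rightarrow> ('a \<Rightarrow> real) \<Rightarrow> 'a \<Rightarrow> real" where
  "Lsig2 n u1 u2 u3 x =
     (Lsig2_diag n (\<lambda>y. u1 y + u2 y + u3 y) x
      - Lsig2_diag n (\<lambda>y. u1 y + u2 y) x
      - Lsig2_diag n (\<lambda>y. u1 y + u3 y) x
      - Lsig2_diag n (\<lambda>y. u2 y + u3 y) x
      + Lsig2_diag n u1 x + Lsig2_diag n u2 x + Lsig2_diag n u3 x) / 6"

definition sigma1 :: "real \<Rightarrow> ('a::euclidean_space \<Rightarrow> real) \<Rightarrow> 'a \<Rightarrow> real" where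
  "sigma1 n u x = - (n - 4) / 8 * slap (\<lambda>y. (u y)\<^sup>2) x - (norm (sgrad u x))\<^sup>2
                  + n / 2 * ((n - 4) / 4)\<^sup>2 * (u x)\<^sup>2"

end

theory Submission
  imports Defs
begin


abbreviation S0 :: "'a::euclidean_space set" where "S0 \<equiv> UNIV - {0}"

lemma open_S0: "open (S0::'a::euclidean_space set)"
  by (simp add: open_Diff)

definition D1 :: "('a::euclidean_space \<Rightarrow> real) \<Rightarrow> 'a \<Rightarrow> 'a \<Rightarrow> real" where
  "D1 F y v = frechet_derivative F (at y) v"

lemma fd_cong:
  assumes "open S" "y \<in> S" "\<And>z. z \<in> S \<Longrightarrow> f z = g z"
  shows "frechet_derivative f (at y) = frechet_derivative g (at y)"
proof -
  have "(f has_derivative f') (at y) \<longleftrightarrow> (g has_derivative f') (at y)" for f'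
  proof
    assume "(f has_derivative f') (at y)"
    then show "(g has_derivative f') (at y)"
      by (rule has_derivative_transform_within_open[OF _ assms(1,2)]) (simp add: assms(3))
  next
    assume "(g has_derivative f') (at y)"
    then show "(f has_derivative f') (at y)"
      by (rule has_derivative_transform_within_open[OF _ assms(1,2)]) (simp add: assms(3))
  qed
  then show ?thesis unfolding frechet_derivative_def by simp
qed

lemma D1_cong:
  assumes "y \<in> S0" "\<And>z. z \<in> S0 \<Longrightarrow> f z = g z"
  shows "D1 f y = D1 g y"
  unfolding D1_def using fd_cong[OF open_S0 assms] by simp

lemma dirderiv_D1: "dirderiv b F = (\<lambda>y. D1 F y b)"
  by (simp add: dirderiv_def D1_def fun_eq_iff)

lemma diffon_cong:
  assumes "F differentiable_on S0" "\<And>z. z \<in> S0 \<Longrightarrow> F z = G z"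
  shows "G differentiable_on S0"
proof -
  have "G differentiable at y" if "y \<in> S0" for y
  proof -
    from assms(1) that have "F differentiable at y"
      using differentiable_on_eq_differentiable_at[OF open_S0] by blast
    then obtain f' where "(F has_derivative f') (at y)" by (auto simp: differentiable_def)
    then have "(G has_derivative f') (at y)"
      by (rule has_derivative_transform_within_open[OF _ open_S0 that]) (rule assms(2))
    then show ?thesis by (auto simp: differentiable_def)
  qed
  then show ?thesis using differentiable_on_eq_differentiable_at[OF open_S0] by blast
qed

primrec smk :: "nat \<Rightarrow> ('a::euclidean_space \<Rightarrow> real) \<Rightarrow> bool" where
  "smk 0 F = (F differentiable_on S0)"
| "smk (Suc k) F = (F differentiable_on S0 \<and> (\<forall>b\<in>Basis. smk k (\<lambda>y. D1 F y b)))"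

lemma smk_diff: "smk k F \<Longrightarrow> F differentiable_on S0"
  by (cases k) auto

lemma smk_cong: "smk k F \<Longrightarrow> (\<And>z. z \<in> S0 \<Longrightarrow> F z = G z) \<Longrightarrow> smk k G"
proof (induction k arbitrary: F G)
  case 0
  then show ?case using diffon_cong by auto
next
  case (Suc k)
  have dG: "G differentiable_on S0" using Suc.prems(1) Suc.prems(2) diffon_cong[of F G] by simp
  have "smk k (\<lambda>y. D1 G y b)" if "b \<in> Basis" for b
  proof -
    have A: "smk k (\<lambda>y. D1 F y b)" using Suc.prems that by auto
    have B: "D1 F z b = D1 G z b" if "z \<in> S0" for z
      using D1_cong[OF that Suc.prems(2)] by simp
    show ?thesis by (rule Suc.IH[OF A B])
  qed
  then show ?case using dG by simp
qed

lemma smk_mono: "smk (Suc k) F \<Longrightarrow> smk k F"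
proof (induction k arbitrary: F)
  case 0 then show ?case by simp
next
  case (Suc k) then show ?case by simp
qed

lemma smk_le: "j \<le> k \<Longrightarrow> smk k F \<Longrightarrow> smk j F"
proof (induction k)
  case 0 then show ?case by simp
next
  case (Suc k) then show ?case using smk_mono le_Suc_eq by blast
qed

lemma smooth_smk: "smooth_on S0 F \<Longrightarrow> smk k F"
proof (induction k arbitrary: F)
  case 0
  have "foldr dirderiv [] F differentiable_on S0" using 0 unfolding smooth_on_def
    by (metis empty_set empty_subsetI)
  then show ?case by simp
next
  case (Suc k)
  have "foldr dirderiv [] F differentiable_on S0" using Suc.prems unfolding smooth_on_def
    by (metis empty_set empty_subsetI)
  then have d: "F differentiable_on S0" by simp
  have "smooth_on S0 (\<lambda>y. D1 F y b)" if "b \<in> Basis" for b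
    unfolding smooth_on_def
  proof (intro allI impI)
    fix bs :: "'a list" assume "set bs \<subseteq> Basis"
    then have "set (bs @ [b]) \<subseteq> Basis" using that by auto
    then have "foldr dirderiv (bs @ [b]) F differentiable_on S0"
      using Suc.prems unfolding smooth_on_def by blast
    then show "foldr dirderiv bs (\<lambda>y. D1 F y b) differentiable_on S0"
      by (simp add: dirderiv_D1)
  qed
  then show ?case using Suc.IH d by auto
qed

lemma smk_at: "smk k F \<Longrightarrow> y \<in> S0 \<Longrightarrow> F differentiable at y"
  using smk_diff differentiable_on_eq_differentiable_at[OF open_S0] by blast

lemma smk_hasd: "smk k F \<Longrightarrow> y \<in> S0 \<Longrightarrow> (F has_derivative D1 F y) (at y)"
  using smk_at frechet_derivative_works unfolding D1_def[abs_def] by metis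

lemma smk_lin: "smk k F \<Longrightarrow> y \<in> S0 \<Longrightarrow> linear (D1 F y)"
  using smk_at linear_frechet_derivative unfolding D1_def[abs_def] by metis

lemma D1_eqI: "(F has_derivative F') (at y) \<Longrightarrow> D1 F y v = F' v"
  unfolding D1_def using frechet_derivative_at by metis

lemma D1_add:
  assumes "smk j F" "smk k G" "y \<in> S0"
  shows "D1 (\<lambda>z. F z + G z) y v = D1 F y v + D1 G y v"
proof -
  note hF = smk_hasd[OF assms(1,3)] and hG = smk_hasd[OF assms(2,3)]
  show ?thesis by (rule D1_eqI) (intro derivative_intros hF hG)
qed

lemma D1_diff:
  assumes "smk j F" "smk k G" "y \<in> S0"
  shows "D1 (\<lambda>z. F z - G z) y v = D1 F y v - D1 G y v"
proof -
  note hF = smk_hasd[OF assms(1,3)] and hG = smk_hasd[OF assms(2,3)]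
  show ?thesis by (rule D1_eqI) (intro derivative_intros hF hG)
qed

lemma D1_mult:
  assumes "smk j F" "smk k G" "y \<in> S0"
  shows "D1 (\<lambda>z. F z * G z) y v = D1 F y v * G y + F y * D1 G y v"
proof -
  note hF = smk_hasd[OF assms(1,3)] and hG = smk_hasd[OF assms(2,3)]
  have "((\<lambda>z. F z * G z) has_derivative (\<lambda>h. F y * D1 G y h + D1 F y h * G y)) (at y)"
    by (intro derivative_intros hF hG)
  then show ?thesis by (simp add: D1_eqI)
qed

lemma D1_cmult:
  assumes "smk j F" "y \<in> S0"
  shows "D1 (\<lambda>z. c * F z) y v = c * D1 F y v"
proof -
  note hF = smk_hasd[OF assms(1,2)]
  have "((\<lambda>z. c * F z) has_derivative (\<lambda>h. c * D1 F y h)) (at y)"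
    by (intro derivative_intros hF)
  then show ?thesis by (simp add: D1_eqI)
qed

lemma D1_const: "D1 (\<lambda>z. c) y v = 0"
  by (simp add: D1_def)

lemma D1_coord: "D1 (\<lambda>z. z \<bullet> e) y v = v \<bullet> e"
  by (rule D1_eqI) (intro derivative_intros)

lemma smk_const: "smk k (\<lambda>z. c)"
  by (induction k arbitrary: c) (auto simp: D1_const)

lemma smk_add: "smk k F \<Longrightarrow> smk k G \<Longrightarrow> smk k (\<lambda>z. F z + G z)"
proof (induction k arbitrary: F G)
  case 0 then show ?case by simp
next
  case (Suc k)
  have "smk k (\<lambda>y. D1 (\<lambda>z. F z + G z) y b)" if "b \<in> Basis" for b
  proof (rule smk_cong)
    show "smk k (\<lambda>y. D1 F y b + D1 G y b)" using Suc that by auto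
    show "D1 F z b + D1 G z b = D1 (\<lambda>z. F z + G z) z b" if "z \<in> S0" for z
      using D1_add[OF Suc.prems that] by simp
  qed
  then show ?case using Suc.prems by auto
qed

lemma smk_mult: "smk k F \<Longrightarrow> smk k G \<Longrightarrow> smk k (\<lambda>z. F z * G z)"
proof (induction k arbitrary: F G)
  case 0 then show ?case by simp
next
  case (Suc k)
  have "smk k (\<lambda>y. D1 (\<lambda>z. F z * G z) y b)" if "b \<in> Basis" for b
  proof (rule smk_cong)
    have "smk k (\<lambda>y. D1 F y b)" "smk k (\<lambda>y. D1 G y b)" using Suc.prems that by auto
    moreover have "smk k F" "smk k G" using Suc.prems smk_mono by blast+
    ultimately show "smk k (\<lambda>y. D1 F y b * G y + F y * D1 G y b)"
      using Suc.IH smk_add by blast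
    show "D1 F z b * G z + F z * D1 G z b = D1 (\<lambda>z. F z * G z) z b" if "z \<in> S0" for z
      using D1_mult[OF Suc.prems that] by simp
  qed
  then show ?case using Suc.prems by auto
qed

lemma smk_cmult: "smk k F \<Longrightarrow> smk k (\<lambda>z. c * F z)"
  using smk_mult[OF smk_const] by blast

lemma smk_diff2: "smk k F \<Longrightarrow> smk k G \<Longrightarrow> smk k (\<lambda>z. F z - G z)"
  using smk_add[of k F "\<lambda>z. (-1) * G z"] smk_cmult[of k G "-1"] by simp

lemma smk_sum: "finite I \<Longrightarrow> (\<And>i. i \<in> I \<Longrightarrow> smk k (f i)) \<Longrightarrow> smk k (\<lambda>z. \<Sum>i\<in>I. f i z)"
proof (induction I rule: finite_induct)
  case empty then show ?case by (simp add: smk_const)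
next
  case (insert i I) then show ?case using smk_add[of k "f i" "\<lambda>z. \<Sum>i\<in>I. f i z"] by simp
qed

lemma smk_coord: "smk k (\<lambda>z. z \<bullet> e)"
proof (induction k arbitrary: e)
  case 0 then show ?case
    by (simp add: bounded_linear_imp_differentiable_on bounded_linear_inner_left)
next
  case (Suc k) then show ?case
    by (simp add: bounded_linear_imp_differentiable_on bounded_linear_inner_left D1_coord smk_const)
qed

definition rr :: "'a::euclidean_space \<Rightarrow> real" where "rr y = inverse (norm y)"

lemma rr_hasd:
  assumes "(y::'a::euclidean_space) \<noteq> 0"
  shows "(rr has_derivative (\<lambda>h. - (h \<bullet> y) * rr y ^ 3)) (at y)"
proof -
  have "((\<lambda>y. inverse (norm y)) has_derivative
     (\<lambda>h. - (inverse (norm y) * (h \<bullet> sgn y) * inverse (norm y)))) (at y)"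
    using assms by (intro derivative_intros has_derivative_norm) auto
  moreover have "- (inverse (norm y) * (h \<bullet> sgn y) * inverse (norm y)) = - (h \<bullet> y) * rr y ^ 3" for h
    using assms by (simp add: rr_def sgn_div_norm power3_eq_cube field_simps)
  ultimately show ?thesis unfolding rr_def[abs_def] by simp
qed

lemma D1_rr: "y \<in> S0 \<Longrightarrow> D1 rr y v = - (v \<bullet> y) * rr y ^ 3"
  using rr_hasd D1_eqI by fastforce

lemma smk_rr: "smk k (rr::'a::euclidean_space \<Rightarrow> real)"
proof (induction k)
  have d: "rr differentiable_on (S0::'a set)"
    using rr_hasd differentiable_on_eq_differentiable_at[OF open_S0]
    by (metis DiffD2 differentiableI insertI1)
  case 0 show ?case using d by simp
  case (Suc k)
  have "smk k (\<lambda>y. D1 rr y b)" for b :: 'a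
  proof (rule smk_cong)
    have "smk k (\<lambda>y::'a. rr y * rr y)" by (rule smk_mult[OF Suc.IH Suc.IH])
    then have "smk k (\<lambda>y::'a. rr y * (rr y * rr y))" by (rule smk_mult[OF Suc.IH])
    then have "smk k (\<lambda>y::'a. (y \<bullet> b) * (rr y * (rr y * rr y)))" by (rule smk_mult[OF smk_coord])
    then show "smk k (\<lambda>y. (-1) * ((y \<bullet> b) * (rr y * (rr y * rr y))))" by (rule smk_cmult)
    show "(-1) * ((z \<bullet> b) * (rr z * (rr z * rr z))) = D1 rr z b" if "z \<in> S0" for z
      using D1_rr[OF that] by (simp add: power3_eq_cube inner_commute)
  qed
  then show ?case using d by simp
qed



definition D2 :: "('a::euclidean_space \<Rightarrow> real) \<Rightarrow> 'a \<Rightarrow> 'a \<Rightarrow> 'a \<Rightarrow> real" where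
  "D2 F y v w = D1 (\<lambda>z. D1 F z w) y v"

definition D3 :: "('a::euclidean_space \<Rightarrow> real) \<Rightarrow> 'a \<Rightarrow> 'a \<Rightarrow> 'a \<Rightarrow> 'a \<Rightarrow> real" where
  "D3 F y s v w = D1 (\<lambda>z. D2 F z v w) y s"

lemma lin_expand:
  fixes f :: "'a::euclidean_space \<Rightarrow> real"
  assumes "linear f"
  shows "f w = (\<Sum>b\<in>Basis. (w \<bullet> b) * f b)"
proof -
  have "f w = f (\<Sum>b\<in>Basis. (w \<bullet> b) *\<^sub>R b)" by (simp add: euclidean_representation)
  also have "\<dots> = (\<Sum>b\<in>Basis. (w \<bullet> b) * f b)"
    by (simp add: linear_sum[OF assms] linear_scale[OF assms] o_def)
  finally show ?thesis .
qed

lemma smk_D1: "smk (Suc k) F \<Longrightarrow> smk k (\<lambda>z. D1 F z w)"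
proof (rule smk_cong)
  assume a: "smk (Suc k) F"
  have A: "b \<in> Basis \<Longrightarrow> smk k (\<lambda>y. D1 F y b)" for b using a by simp
  show "smk k (\<lambda>z. \<Sum>b\<in>Basis. (w \<bullet> b) * D1 F z b)"
    by (rule smk_sum[OF finite_Basis]) (rule smk_cmult[OF A])
  show "(\<Sum>b\<in>Basis. (w \<bullet> b) * D1 F z b) = D1 F z w" if "z \<in> S0" for z
    by (rule lin_expand[OF smk_lin[OF a that], symmetric])
qed

lemma smk_D2: "smk (Suc (Suc k)) F \<Longrightarrow> smk k (\<lambda>z. D2 F z v w)"
  unfolding D2_def by (intro smk_D1)

lemma smk_D3: "smk (Suc (Suc (Suc k))) F \<Longrightarrow> smk k (\<lambda>z. D3 F z s v w)"
  unfolding D3_def by (intro smk_D1 smk_D2)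

lemma smk_ge: "smk k F \<Longrightarrow> j \<le> k \<Longrightarrow> smk j F" using smk_le by blast

lemma hasd0: "smk k F \<Longrightarrow> y \<in> S0 \<Longrightarrow> (F has_derivative (\<lambda>v. D1 F y v)) (at y)"
  using smk_hasd by (metis eta_contract_eq)

lemma hasd1: "smk (Suc k) F \<Longrightarrow> y \<in> S0 \<Longrightarrow> ((\<lambda>z. D1 F z w) has_derivative (\<lambda>v. D2 F y v w)) (at y)"
  unfolding D2_def using smk_hasd[OF smk_D1] by metis

lemma hasd2: "smk (Suc (Suc k)) F \<Longrightarrow> y \<in> S0 \<Longrightarrow> ((\<lambda>z. D2 F z v w) has_derivative (\<lambda>s. D3 F y s v w)) (at y)"
  unfolding D3_def using smk_hasd[OF smk_D2] by metis

lemma lin_D1: "smk k F \<Longrightarrow> y \<in> S0 \<Longrightarrow> linear (\<lambda>v. D1 F y v)"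
  using smk_lin by (metis eta_contract_eq)

lemma lin_D2: "smk (Suc k) F \<Longrightarrow> y \<in> S0 \<Longrightarrow> linear (\<lambda>v. D2 F y v w)"
  unfolding D2_def using smk_lin[OF smk_D1] by (metis eta_contract_eq)

lemma lin_D3: "smk (Suc (Suc k)) F \<Longrightarrow> y \<in> S0 \<Longrightarrow> linear (\<lambda>s. D3 F y s v w)"
  unfolding D3_def using smk_lin[OF smk_D2] by (metis eta_contract_eq)

lemma D2_cong:
  assumes "y \<in> S0" "\<And>z. z \<in> S0 \<Longrightarrow> F z = G z"
  shows "D2 F y v w = D2 G y v w"
proof -
  have "D1 (\<lambda>z. D1 F z w) y = D1 (\<lambda>z. D1 G z w) y"
    by (rule D1_cong[OF assms(1)], rule fun_cong[OF D1_cong[OF _ assms(2)]], assumption)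
  then show ?thesis unfolding D2_def by simp
qed

lemma D3_cong:
  assumes "y \<in> S0" "\<And>z. z \<in> S0 \<Longrightarrow> F z = G z"
  shows "D3 F y s v w = D3 G y s v w"
proof -
  have "D1 (\<lambda>z. D2 F z v w) y = D1 (\<lambda>z. D2 G z v w) y"
    by (rule D1_cong[OF assms(1)], rule D2_cong[OF _ assms(2)], assumption)
  then show ?thesis unfolding D3_def by simp
qed

lemma D1_sum:
  assumes "finite I" "\<And>i. i \<in> I \<Longrightarrow> smk 0 (f i)" "y \<in> S0"
  shows "D1 (\<lambda>z. \<Sum>i\<in>I. f i z) y v = (\<Sum>i\<in>I. D1 (f i) y v)"
proof -
  have "((\<lambda>z. \<Sum>i\<in>I. f i z) has_derivative (\<lambda>v. \<Sum>i\<in>I. D1 (f i) y v)) (at y)"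
    by (rule has_derivative_sum) (rule hasd0[OF assms(2) assms(3)])
  then show ?thesis by (rule D1_eqI)
qed

lemma D2_sum:
  assumes "finite I" "\<And>i. i \<in> I \<Longrightarrow> smk 1 (f i)" "y \<in> S0"
  shows "D2 (\<lambda>z. \<Sum>i\<in>I. f i z) y v w = (\<Sum>i\<in>I. D2 (f i) y v w)"
proof -
  have h0: "\<And>i. i \<in> I \<Longrightarrow> smk 0 (f i)" using assms(2) smk_ge by blast
  have "D2 (\<lambda>z. \<Sum>i\<in>I. f i z) y v w = D1 (\<lambda>z. \<Sum>i\<in>I. D1 (f i) z w) y v"
    unfolding D2_def
    by (rule fun_cong[OF D1_cong[OF assms(3)]], rule D1_sum[OF assms(1) h0], assumption+)
  also have "\<dots> = (\<Sum>i\<in>I. D2 (f i) y v w)"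
    unfolding D2_def
    by (rule D1_sum[OF assms(1) _ assms(3)]) (metis One_nat_def smk_D1 assms(2))
  finally show ?thesis .
qed

lemma D3_sum:
  assumes "finite I" "\<And>i. i \<in> I \<Longrightarrow> smk 2 (f i)" "y \<in> S0"
  shows "D3 (\<lambda>z. \<Sum>i\<in>I. f i z) y s v w = (\<Sum>i\<in>I. D3 (f i) y s v w)"
proof -
  have h0: "\<And>i. i \<in> I \<Longrightarrow> smk 1 (f i)" using assms(2) smk_ge by (metis one_le_numeral)
  have "D3 (\<lambda>z. \<Sum>i\<in>I. f i z) y s v w = D1 (\<lambda>z. \<Sum>i\<in>I. D2 (f i) z v w) y s"
    unfolding D3_def
    by (rule fun_cong[OF D1_cong[OF assms(3)]], rule D2_sum[OF assms(1) h0], assumption+)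
  also have "\<dots> = (\<Sum>i\<in>I. D3 (f i) y s v w)"
    unfolding D3_def
    by (rule D1_sum[OF assms(1) _ assms(3)]) (metis numeral_2_eq_2 smk_D2 assms(2))
  finally show ?thesis .
qed



lemma D2_add:
  assumes "smk (Suc j) F" "smk (Suc k) G" "y \<in> S0"
  shows "D2 (\<lambda>z. F z + G z) y v w = D2 F y v w + D2 G y v w"
proof -
  have "D2 (\<lambda>z. F z + G z) y v w = D1 (\<lambda>z. D1 F z w + D1 G z w) y v"
    unfolding D2_def by (rule fun_cong[OF D1_cong[OF assms(3)]], rule D1_add[OF assms(1,2)], assumption)
  also have "\<dots> = D2 F y v w + D2 G y v w"
  proof (rule D1_eqI)
    show "((\<lambda>z. D1 F z w + D1 G z w) has_derivative (\<lambda>v. D2 F y v w + D2 G y v w)) (at y)"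
      by (intro derivative_intros hasd1[OF assms(1,3)] hasd1[OF assms(2,3)])
  qed
  finally show ?thesis .
qed

lemma D2_cmult:
  assumes "smk (Suc j) F" "y \<in> S0"
  shows "D2 (\<lambda>z. c * F z) y v w = c * D2 F y v w"
proof -
  have "D2 (\<lambda>z. c * F z) y v w = D1 (\<lambda>z. c * D1 F z w) y v"
    unfolding D2_def by (rule fun_cong[OF D1_cong[OF assms(2)]], rule D1_cmult[OF assms(1)], assumption)
  also have "\<dots> = c * D2 F y v w"
  proof (rule D1_eqI)
    show "((\<lambda>z. c * D1 F z w) has_derivative (\<lambda>v. c * D2 F y v w)) (at y)"
      by (intro derivative_intros hasd1[OF assms(1,2)])
  qed
  finally show ?thesis .
qed

lemma D2_mult:
  assumes "smk (Suc j) F" "smk (Suc k) G" "y \<in> S0"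
  shows "D2 (\<lambda>z. F z * G z) y v w = D2 F y v w * G y + D1 F y w * D1 G y v
            + D1 F y v * D1 G y w + F y * D2 G y v w"
proof -
  have "D2 (\<lambda>z. F z * G z) y v w = D1 (\<lambda>z. D1 F z w * G z + F z * D1 G z w) y v"
    unfolding D2_def by (rule fun_cong[OF D1_cong[OF assms(3)]], rule D1_mult[OF assms(1,2)], assumption)
  also have "\<dots> = D2 F y v w * G y + D1 F y w * D1 G y v + D1 F y v * D1 G y w + F y * D2 G y v w"
  proof (rule D1_eqI)
    show "((\<lambda>z. D1 F z w * G z + F z * D1 G z w) has_derivative (\<lambda>v. D2 F y v w * G y + D1 F y w * D1 G y v
            + D1 F y v * D1 G y w + F y * D2 G y v w)) (at y)"
      apply (rule has_derivative_eq_rhs)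
       apply (rule derivative_intros hasd1[OF assms(1,3), of w] hasd1[OF assms(2,3), of w]
          hasd0[OF assms(1,3)] hasd0[OF assms(2,3)])+
      apply (simp add: fun_eq_iff algebra_simps)
      done
  qed
  finally show ?thesis .
qed

lemma D3_add:
  assumes "smk (Suc (Suc j)) F" "smk (Suc (Suc k)) G" "y \<in> S0"
  shows "D3 (\<lambda>z. F z + G z) y s v w = D3 F y s v w + D3 G y s v w"
proof -
  have "D3 (\<lambda>z. F z + G z) y s v w = D1 (\<lambda>z. D2 F z v w + D2 G z v w) y s"
    unfolding D3_def by (rule fun_cong[OF D1_cong[OF assms(3)]], rule D2_add[OF smk_mono[OF assms(1)] smk_mono[OF assms(2)]], assumption)
  also have "\<dots> = D3 F y s v w + D3 G y s v w"
  proof (rule D1_eqI)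
    show "((\<lambda>z. D2 F z v w + D2 G z v w) has_derivative (\<lambda>s. D3 F y s v w + D3 G y s v w)) (at y)"
      by (intro derivative_intros hasd2[OF assms(1,3)] hasd2[OF assms(2,3)])
  qed
  finally show ?thesis .
qed

lemma D3_cmult:
  assumes "smk (Suc (Suc j)) F" "y \<in> S0"
  shows "D3 (\<lambda>z. c * F z) y s v w = c * D3 F y s v w"
proof -
  have "D3 (\<lambda>z. c * F z) y s v w = D1 (\<lambda>z. c * D2 F z v w) y s"
    unfolding D3_def by (rule fun_cong[OF D1_cong[OF assms(2)]], rule D2_cmult[OF smk_mono[OF assms(1)]], assumption)
  also have "\<dots> = c * D3 F y s v w"
  proof (rule D1_eqI)
    show "((\<lambda>z. c * D2 F z v w) has_derivative (\<lambda>s. c * D3 F y s v w)) (at y)"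
      by (intro derivative_intros hasd2[OF assms(1,2)])
  qed
  finally show ?thesis .
qed

lemma D3_mult:
  assumes "smk (Suc (Suc j)) F" "smk (Suc (Suc k)) G" "y \<in> S0"
  shows "D3 (\<lambda>z. F z * G z) y s v w =
      D3 F y s v w * G y + D2 F y v w * D1 G y s + D2 F y s w * D1 G y v + D1 F y w * D2 G y s v
    + D2 F y s v * D1 G y w + D1 F y v * D2 G y s w + D1 F y s * D2 G y v w + F y * D3 G y s v w"
proof -
  have "D3 (\<lambda>z. F z * G z) y s v w = D1 (\<lambda>z. D2 F z v w * G z + D1 F z w * D1 G z v
            + D1 F z v * D1 G z w + F z * D2 G z v w) y s"
    unfolding D3_def by (rule fun_cong[OF D1_cong[OF assms(3)]], rule D2_mult[OF smk_mono[OF assms(1)] smk_mono[OF assms(2)]], assumption)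
  also have "\<dots> = D3 F y s v w * G y + D2 F y v w * D1 G y s + D2 F y s w * D1 G y v + D1 F y w * D2 G y s v
    + D2 F y s v * D1 G y w + D1 F y v * D2 G y s w + D1 F y s * D2 G y v w + F y * D3 G y s v w"
  proof (rule D1_eqI)
    have a1: "smk (Suc j) F" "smk (Suc k) G" using assms smk_mono by blast+
    show "((\<lambda>z. D2 F z v w * G z + D1 F z w * D1 G z v
            + D1 F z v * D1 G z w + F z * D2 G z v w) has_derivative (\<lambda>s. D3 F y s v w * G y + D2 F y v w * D1 G y s + D2 F y s w * D1 G y v + D1 F y w * D2 G y s v
    + D2 F y s v * D1 G y w + D1 F y v * D2 G y s w + D1 F y s * D2 G y v w + F y * D3 G y s v w)) (at y)"
      apply (rule has_derivative_eq_rhs)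
       apply (rule derivative_intros hasd2[OF assms(1,3), of v w] hasd2[OF assms(2,3), of v w]
          hasd1[OF a1(1) assms(3), of w] hasd1[OF a1(2) assms(3), of w]
          hasd1[OF a1(1) assms(3), of v] hasd1[OF a1(2) assms(3), of v]
          hasd0[OF assms(1,3)] hasd0[OF assms(2,3)])+
      apply (simp add: fun_eq_iff algebra_simps)
      done
  qed
  finally show ?thesis .
qed

definition homog0 :: "('a::euclidean_space \<Rightarrow> real) \<Rightarrow> bool" where
  "homog0 F \<longleftrightarrow> (\<forall>t>0. \<forall>y. y \<noteq> 0 \<longrightarrow> F (t *\<^sub>R y) = F y)"

lemma homog0_hext: "homog0 (hext f)"
  unfolding homog0_def hext_def by simp

lemma hext_unit: "norm x = 1 \<Longrightarrow> hext f x = f x"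
  unfolding hext_def by simp

lemma euler0:
  assumes "smk k F" "homog0 F" "y \<in> S0" "t > 0"
  shows "D1 F (t *\<^sub>R y) w = D1 F y w / t"
proof -
  have ty: "t *\<^sub>R y \<in> S0" using assms by auto
  have h1: "((\<lambda>z. F (t *\<^sub>R z)) has_derivative (\<lambda>h. D1 F (t *\<^sub>R y) (t *\<^sub>R h))) (at y)"
  proof -
    have hs: "((\<lambda>z. t *\<^sub>R z) has_derivative (\<lambda>h. t *\<^sub>R h)) (at y)" by (rule derivative_intros)+
    show ?thesis using has_derivative_compose[OF hs hasd0[OF assms(1) ty]] by simp
  qed
  have h2: "((\<lambda>z. F (t *\<^sub>R z)) has_derivative (\<lambda>h. D1 F y h)) (at y)"
    by (rule has_derivative_transform_within_open[OF hasd0[OF assms(1,3)] open_S0 assms(3)])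
       (use assms(2,4) in \<open>auto simp: homog0_def\<close>)
  have "(\<lambda>h. D1 F (t *\<^sub>R y) (t *\<^sub>R h)) = (\<lambda>h. D1 F y h)"
    using has_derivative_unique[OF h1 h2] .
  then have "D1 F (t *\<^sub>R y) (t *\<^sub>R w) = D1 F y w" by metis
  moreover have "D1 F (t *\<^sub>R y) (t *\<^sub>R w) = t * D1 F (t *\<^sub>R y) w"
    using linear_scale[OF lin_D1[OF assms(1) ty]] by simp
  ultimately show ?thesis using assms(4) by (simp add: field_simps)
qed

lemma euler1:
  assumes "smk k F" "homog0 F" "y \<in> S0"
  shows "D1 F y y = 0"
proof -
  have y1: "1 *\<^sub>R y \<in> S0" using assms by simp
  have h1: "((\<lambda>s::real. F (s *\<^sub>R y)) has_derivative (\<lambda>h. D1 F (1 *\<^sub>R y) (h *\<^sub>R y))) (at 1)"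
  proof -
    have hs: "((\<lambda>s::real. s *\<^sub>R y) has_derivative (\<lambda>h. h *\<^sub>R y)) (at 1)" by (rule derivative_intros)+
    show ?thesis using has_derivative_compose[OF hs hasd0[OF assms(1) y1]] by simp
  qed
  have h2: "((\<lambda>s::real. F (s *\<^sub>R y)) has_derivative (\<lambda>h. 0)) (at 1)"
  proof -
    have c: "((\<lambda>s::real. F y) has_derivative (\<lambda>h. 0)) (at 1)" by (rule derivative_intros)
    show ?thesis
      by (rule has_derivative_transform_within_open[OF c, where s="{0<..}"])
         (use assms(2,3) in \<open>auto simp: homog0_def\<close>)
  qed
  have "(\<lambda>h. D1 F (1 *\<^sub>R y) (h *\<^sub>R y)) = (\<lambda>h. 0)"
    using has_derivative_unique[OF h1 h2] .
  then show ?thesis by (metis scaleR_one)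
qed

lemma euler2:
  assumes "smk (Suc k) F" "homog0 F" "y \<in> S0"
  shows "D2 F y y w = - D1 F y w"
proof -
  have y1: "1 *\<^sub>R y \<in> S0" using assms by simp
  have h1: "((\<lambda>s::real. D1 F (s *\<^sub>R y) w) has_derivative (\<lambda>h. D2 F (1 *\<^sub>R y) (h *\<^sub>R y) w)) (at 1)"
  proof -
    have hs: "((\<lambda>s::real. s *\<^sub>R y) has_derivative (\<lambda>h. h *\<^sub>R y)) (at 1)" by (rule derivative_intros)+
    show ?thesis using has_derivative_compose[OF hs hasd1[OF assms(1) y1, of w]] by simp
  qed
  have h2: "((\<lambda>s::real. D1 F (s *\<^sub>R y) w) has_derivative (\<lambda>h. - D1 F y w * h)) (at 1)"
  proof -
    have c: "((\<lambda>s::real. D1 F y w / s) has_derivative (\<lambda>h. - D1 F y w * h)) (at 1)"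
      apply (rule has_derivative_eq_rhs)
       apply (rule derivative_intros)+
       apply simp
      apply (simp add: fun_eq_iff)
      done
    show ?thesis
    proof (rule has_derivative_transform_within_open[OF c, where s="{0<..}"])
      show "D1 F y w / s = D1 F (s *\<^sub>R y) w" if "s \<in> {0<..}" for s
        using euler0[OF assms(1,2,3), of s w] that by simp
    qed auto
  qed
  have "(\<lambda>h. D2 F (1 *\<^sub>R y) (h *\<^sub>R y) w) = (\<lambda>h. - D1 F y w * h)"
    using has_derivative_unique[OF h1 h2] .
  then show ?thesis by (metis scaleR_one mult_1_right)
qed



definition gv :: "('a::euclidean_space \<Rightarrow> real) \<Rightarrow> 'a \<Rightarrow> 'a" where
  "gv F y = (\<Sum>c\<in>Basis. D1 F y c *\<^sub>R c)"

definition Nmap :: "'a::euclidean_space \<Rightarrow> 'a" where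
  "Nmap y = (1 / norm y) *\<^sub>R y"

definition DN :: "'a::euclidean_space \<Rightarrow> 'a \<Rightarrow> 'a" where
  "DN y h = rr y *\<^sub>R h - ((h \<bullet> y) * rr y ^ 3) *\<^sub>R y"

lemma sgrad_gv: "sgrad f = gv (hext f)"
  by (simp add: sgrad_def gv_def D1_def fun_eq_iff)

lemma hext_comp: "hext V = (\<lambda>y. V (Nmap y))"
  by (simp add: hext_def Nmap_def fun_eq_iff)

lemma Nmap_unit: "norm x = 1 \<Longrightarrow> Nmap x = x"
  by (simp add: Nmap_def)

lemma rr_unit: "norm x = 1 \<Longrightarrow> rr x = 1"
  by (simp add: rr_def)

lemma DN_unit: "norm x = 1 \<Longrightarrow> DN x h = h - (h \<bullet> x) *\<^sub>R x"
  by (simp add: DN_def rr_def)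

lemma Nmap_S0: "y \<in> S0 \<Longrightarrow> Nmap y \<in> S0"
  by (simp add: Nmap_def)

lemma Nmap_rr: "Nmap y = rr y *\<^sub>R y"
  by (simp add: Nmap_def rr_def divide_inverse)

lemma Nmap_hasd:
  assumes "y \<in> S0"
  shows "(Nmap has_derivative DN y) (at y)"
proof -
  have "((\<lambda>y. rr y *\<^sub>R y) has_derivative (\<lambda>h. rr y *\<^sub>R h + (- (h \<bullet> y) * rr y ^ 3) *\<^sub>R y)) (at y)"
    using assms by (intro derivative_intros rr_hasd) auto
  moreover have "(\<lambda>h. rr y *\<^sub>R h + (- (h \<bullet> y) * rr y ^ 3) *\<^sub>R y) = DN y"
    by (simp add: DN_def fun_eq_iff)
  ultimately show ?thesis by (simp add: Nmap_rr[abs_def])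
qed

lemma sdiv_formula:
  assumes "y \<in> S0" "(V has_derivative V') (at (Nmap y))"
  shows "sdiv V y = (\<Sum>b\<in>Basis. V' (DN y b) \<bullet> b)"
proof -
  have "((\<lambda>y. V (Nmap y)) has_derivative (\<lambda>h. V' (DN y h))) (at y)"
    using has_derivative_compose[OF Nmap_hasd[OF assms(1)] assms(2)] .
  then have "frechet_derivative (hext V) (at y) = (\<lambda>h. V' (DN y h))"
    unfolding hext_comp using frechet_derivative_at by metis
  then show ?thesis by (simp add: sdiv_def)
qed

lemma gv_hasd:
  assumes "smk (Suc k) F" "y \<in> S0"
  shows "(gv F has_derivative (\<lambda>v. \<Sum>c\<in>Basis. D2 F y v c *\<^sub>R c)) (at y)"
  unfolding gv_def[abs_def]
  by (rule has_derivative_sum, rule has_derivative_scaleR_left, rule hasd1[OF assms])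

lemma inner_vsum_basis:
  fixes f :: "'a::euclidean_space \<Rightarrow> real"
  assumes "b \<in> Basis"
  shows "(\<Sum>c\<in>Basis. f c *\<^sub>R c) \<bullet> b = f b"
proof -
  have "(\<Sum>c\<in>Basis. f c *\<^sub>R c) \<bullet> b = (\<Sum>c\<in>Basis. f c * (c \<bullet> b))"
    by (simp add: inner_sum_left)
  also have "\<dots> = (\<Sum>c\<in>Basis. if c = b then f b else 0)"
    by (rule sum.cong) (auto simp: inner_Basis assms)
  also have "\<dots> = f b" using assms by simp
  finally show ?thesis .
qed

lemma inner_vsum_vsum:
  fixes f g :: "'a::euclidean_space \<Rightarrow> real"
  shows "(\<Sum>c\<in>Basis. f c *\<^sub>R c) \<bullet> (\<Sum>c\<in>Basis. g c *\<^sub>R c) = (\<Sum>c\<in>Basis. f c * g c)"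
proof -
  have "(\<Sum>c\<in>Basis. f c *\<^sub>R c) \<bullet> (\<Sum>c\<in>Basis. g c *\<^sub>R c) = (\<Sum>d\<in>Basis. g d * ((\<Sum>c\<in>Basis. f c *\<^sub>R c) \<bullet> d))"
    by (simp add: inner_sum_right)
  also have "\<dots> = (\<Sum>d\<in>Basis. g d * f d)"
    by (rule sum.cong) (simp_all add: inner_vsum_basis)
  finally show ?thesis by (simp add: mult.commute)
qed

lemma basis_delta:
  fixes f :: "'a::euclidean_space \<Rightarrow> real"
  assumes "b \<in> Basis"
  shows "(\<Sum>c\<in>Basis. f c * (c \<bullet> b)) = f b" "(\<Sum>c\<in>Basis. f c * (b \<bullet> c)) = f b"
    "(\<Sum>c\<in>Basis. (c \<bullet> b) * f c) = f b" "(\<Sum>c\<in>Basis. (b \<bullet> c) * f c) = f b"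
proof -
  show 1: "(\<Sum>c\<in>Basis. f c * (c \<bullet> b)) = f b"
    using inner_vsum_basis[OF assms, of f] by (simp add: inner_sum_left)
  then show "(\<Sum>c\<in>Basis. f c * (b \<bullet> c)) = f b" by (simp add: inner_commute)
  from 1 show "(\<Sum>c\<in>Basis. (c \<bullet> b) * f c) = f b" by (simp add: mult.commute)
  from 1 show "(\<Sum>c\<in>Basis. (b \<bullet> c) * f c) = f b" by (simp add: mult.commute inner_commute)
qed

lemma sum_inner_basis: "(\<Sum>c\<in>Basis. (x \<bullet> c) * (y \<bullet> c)) = x \<bullet> (y::'a::euclidean_space)"
  by (rule euclidean_inner[symmetric])

lemma euler1_sum:
  assumes "smk k F" "homog0 F" "y \<in> S0"
  shows "(\<Sum>b\<in>Basis. (y \<bullet> b) * D1 F y b) = 0"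
  using lin_expand[OF lin_D1[OF assms(1,3)], of y] euler1[OF assms] by simp

lemma euler2_sum:
  assumes "smk (Suc k) F" "homog0 F" "y \<in> S0"
  shows "(\<Sum>b\<in>Basis. (y \<bullet> b) * D2 F y b w) = - D1 F y w"
  using lin_expand[OF lin_D2[OF assms(1,3)], of y] euler2[OF assms] by simp

lemma D2_DN_unit:
  assumes "smk (Suc k) F" "homog0 F" "norm x = 1"
  shows "D2 F x (DN x b) c = D2 F x b c + (b \<bullet> x) * D1 F x c"
proof -
  have x: "x \<in> S0" using assms(3) by auto
  have "D2 F x (DN x b) c = D2 F x b c - (b \<bullet> x) * D2 F x x c"
    using linear_diff[OF lin_D2[OF assms(1) x]] linear_scale[OF lin_D2[OF assms(1) x]]
    by (simp add: DN_unit[OF assms(3)])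
  then show ?thesis using euler2[OF assms(1,2) x] by simp
qed

lemma slap_formula:
  assumes "smk (Suc (Suc k)) (hext h0)" "y \<in> S0"
  shows "slap h0 y = rr y * (\<Sum>b\<in>Basis. D2 (hext h0) (Nmap y) b b)"
proof -
  let ?Q = "hext h0"
  let ?z = "Nmap y"
  have z: "?z \<in> S0" using Nmap_S0[OF assms(2)] .
  have hom: "homog0 ?Q" by (rule homog0_hext)
  have a1: "smk (Suc k) ?Q" using smk_mono[OF assms(1)] .
  have "slap h0 y = sdiv (gv ?Q) y" by (simp add: slap_def sgrad_gv)
  also have "\<dots> = (\<Sum>b\<in>Basis. (\<Sum>c\<in>Basis. D2 ?Q ?z (DN y b) c *\<^sub>R c) \<bullet> b)"
    by (rule sdiv_formula[OF assms(2) gv_hasd[OF a1 z]])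
  also have "\<dots> = (\<Sum>b\<in>Basis. D2 ?Q ?z (DN y b) b)"
    by (rule sum.cong) (simp_all add: inner_vsum_basis)
  also have "\<dots> = (\<Sum>b\<in>Basis. rr y * D2 ?Q ?z b b + (rr y ^ 3 * norm y) * ((y \<bullet> b) * D1 ?Q ?z b))"
  proof (rule sum.cong)
    fix b :: 'a assume b: "b \<in> Basis"
    have yz: "y = norm y *\<^sub>R ?z" using assms(2) by (simp add: Nmap_def)
    have "D2 ?Q ?z (norm y *\<^sub>R ?z) b = norm y * D2 ?Q ?z ?z b"
      using linear_scale[OF lin_D2[OF a1 z]] by simp
    then have "D2 ?Q ?z y b = norm y * D2 ?Q ?z ?z b" by (simp only: yz[symmetric])
    also have "\<dots> = - norm y * D1 ?Q ?z b" using euler2[OF a1 hom z] by simp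
    finally have e: "D2 ?Q ?z y b = - norm y * D1 ?Q ?z b" .
    have "D2 ?Q ?z (DN y b) b = rr y * D2 ?Q ?z b b - ((b \<bullet> y) * rr y ^ 3) * D2 ?Q ?z y b"
      using linear_diff[OF lin_D2[OF a1 z]] linear_scale[OF lin_D2[OF a1 z]]
      by (simp add: DN_def)
    then show "D2 ?Q ?z (DN y b) b = rr y * D2 ?Q ?z b b + (rr y ^ 3 * norm y) * ((y \<bullet> b) * D1 ?Q ?z b)"
      by (simp add: e inner_commute algebra_simps)
  qed simp
  also have "\<dots> = rr y * (\<Sum>b\<in>Basis. D2 ?Q ?z b b) + (rr y ^ 3 * norm y) * (\<Sum>b\<in>Basis. (y \<bullet> b) * D1 ?Q ?z b)"
    by (simp add: sum.distrib sum_distrib_left)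
  also have "(\<Sum>b\<in>Basis. (y \<bullet> b) * D1 ?Q ?z b) = 0"
  proof -
    have yz: "y = norm y *\<^sub>R ?z" using assms(2) by (simp add: Nmap_def)
    have "(\<Sum>b\<in>Basis. (y \<bullet> b) * D1 ?Q ?z b) = D1 ?Q ?z y"
      using lin_expand[OF lin_D1[OF a1 z], of y] by simp
    also have "\<dots> = norm y * D1 ?Q ?z ?z"
    proof -
      have "D1 ?Q ?z (norm y *\<^sub>R ?z) = norm y * D1 ?Q ?z ?z"
        using linear_scale[OF lin_D1[OF a1 z]] by simp
      then show ?thesis by (simp only: yz[symmetric])
    qed
    also have "\<dots> = 0" using euler1[OF a1 hom z] by simp
    finally show ?thesis .
  qed
  finally show ?thesis by simp
qed



definition F1 :: "('a::euclidean_space \<Rightarrow> real) \<Rightarrow> ('a \<Rightarrow> real) \<Rightarrow> real" where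
  "F1 p q = (\<Sum>c\<in>Basis. p c * q c)"
definition GHG :: "('a::euclidean_space \<Rightarrow> real) \<Rightarrow> ('a \<Rightarrow> real) \<Rightarrow> ('a \<Rightarrow> 'a \<Rightarrow> real) \<Rightarrow> real" where
  "GHG p q h = (\<Sum>b\<in>Basis. \<Sum>c\<in>Basis. p b * q c * h b c)"
definition TR :: "('a::euclidean_space \<Rightarrow> 'a \<Rightarrow> real) \<Rightarrow> real" where
  "TR h = (\<Sum>b\<in>Basis. h b b)"
definition HH :: "('a::euclidean_space \<Rightarrow> 'a \<Rightarrow> real) \<Rightarrow> ('a \<Rightarrow> 'a \<Rightarrow> real) \<Rightarrow> real" where
  "HH h k = (\<Sum>b\<in>Basis. \<Sum>c\<in>Basis. h b c * k b c)"
definition T1 :: "('a::euclidean_space \<Rightarrow> real) \<Rightarrow> ('a \<Rightarrow> 'a \<Rightarrow> 'a \<Rightarrow> real) \<Rightarrow> real" where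
  "T1 p T = (\<Sum>c\<in>Basis. p c * (\<Sum>b\<in>Basis. T b b c))"
definition T2 :: "('a::euclidean_space \<Rightarrow> real) \<Rightarrow> ('a \<Rightarrow> 'a \<Rightarrow> 'a \<Rightarrow> real) \<Rightarrow> real" where
  "T2 p T = (\<Sum>c\<in>Basis. p c * (\<Sum>b\<in>Basis. T c b b))"

definition Psi :: "real \<Rightarrow> real \<Rightarrow> real \<Rightarrow> ('a::euclidean_space \<Rightarrow> real) \<Rightarrow> ('a \<Rightarrow> 'a \<Rightarrow> real)
    \<Rightarrow> ('a \<Rightarrow> 'a \<Rightarrow> 'a \<Rightarrow> real) \<Rightarrow> real" where
  "Psi d n v p h T =
     1/2 * (2 * GHG p p h + F1 p p * TR h)
   - (n - 4) / 16 * (v * ((2 * d - 8) * F1 p p + 2 * HH h h + 2 * T1 p T)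
        - (4 * GHG p p h + 2 * F1 p p * TR h + 2 * v * T2 p T + (2 * F1 p p + 2 * v * TR h) * TR h))
   - (n - 1) / 4 * ((n - 4) / 4)\<^sup>2 * v * (2 * F1 p p + 2 * v * TR h)
   + n * (n - 1) / 8 * ((n - 4) / 4) ^ 3 * v ^ 3"


lemma D2_coord: "D2 (\<lambda>z. z \<bullet> e) y v w = 0"
  by (simp add: D2_def D1_coord D1_const)

lemma D2_of_D1: "D2 (\<lambda>y. D1 F y c) y0 v w = D3 F y0 v w c"
  by (simp add: D2_def D3_def)

lemma D1_of_D1: "D1 (\<lambda>y. D1 F y c) y0 w = D2 F y0 w c"
  by (simp add: D2_def)

definition rho :: "'a::euclidean_space \<Rightarrow> real" where "rho y = (\<Sum>c\<in>Basis. (y \<bullet> c) * (y \<bullet> c))"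

lemma rho_eq: "rho y = y \<bullet> y"
  by (simp add: rho_def sum_inner_basis)

lemma smk_rho: "smk k rho"
  unfolding rho_def[abs_def] by (intro smk_sum finite_Basis smk_mult smk_coord)

lemma D1_rho: "y \<in> S0 \<Longrightarrow> D1 rho y w = 2 * (y \<bullet> w)"
proof -
  assume y: "y \<in> S0"
  have "D1 rho y w = (\<Sum>c\<in>Basis. (w \<bullet> c) * (y \<bullet> c) + (y \<bullet> c) * (w \<bullet> c))"
    unfolding rho_def[abs_def]
    by (subst D1_sum[OF finite_Basis _ y], intro smk_mult smk_coord)
       (simp add: D1_mult[OF smk_coord smk_coord y] D1_coord)
  also have "\<dots> = 2 * (\<Sum>c\<in>Basis. (y \<bullet> c) * (w \<bullet> c))"
    by (simp add: sum_distrib_left algebra_simps)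
  also have "\<dots> = 2 * (y \<bullet> w)" by (simp add: sum_inner_basis)
  finally show ?thesis .
qed

lemma D2_rho: "y \<in> S0 \<Longrightarrow> D2 rho y v w = 2 * (v \<bullet> w)"
proof -
  assume y: "y \<in> S0"
  have "D2 rho y v w = (\<Sum>c\<in>Basis. (w \<bullet> c) * (v \<bullet> c) + (v \<bullet> c) * (w \<bullet> c))"
    unfolding rho_def[abs_def]
    by (subst D2_sum[OF finite_Basis _ y], intro smk_mult smk_coord)
       (simp add: D2_mult[OF smk_coord smk_coord y] D1_coord D2_coord)
  also have "\<dots> = 2 * (\<Sum>c\<in>Basis. (v \<bullet> c) * (w \<bullet> c))"
    by (simp add: sum_distrib_left algebra_simps)
  also have "\<dots> = 2 * (v \<bullet> w)" by (simp add: sum_inner_basis)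
  finally show ?thesis .
qed

context
  fixes f :: "'a::euclidean_space \<Rightarrow> real" and x :: 'a
  assumes sm: "\<And>k. smk k (hext f)" and x1: "norm x = 1"
begin

abbreviation "FF \<equiv> hext f"

lemma xS: "x \<in> S0" using x1 by auto

lemma sum_xp: "(\<Sum>b\<in>Basis. (b \<bullet> x) * D1 FF x b) = 0"
  using euler1_sum[OF sm homog0_hext xS] by (simp add: inner_commute)

lemma C1: "sdiv (\<lambda>y. (norm (sgrad f y))\<^sup>2 *\<^sub>R sgrad f y) x
   = 2 * GHG (D1 FF x) (D1 FF x) (D2 FF x) + F1 (D1 FF x) (D1 FF x) * TR (D2 FF x)"
proof -
  let ?p = "D1 FF x" and ?h = "D2 FF x"
  let ?g = "gv FF" and ?g' = "\<lambda>v. \<Sum>c\<in>Basis. D2 FF x v c *\<^sub>R c"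
  have s1: "smk (Suc 0) FF" by (rule sm)
  have hg: "(?g has_derivative ?g') (at x)" by (rule gv_hasd[OF s1 xS])
  have hV: "((\<lambda>y. (?g y \<bullet> ?g y) *\<^sub>R ?g y) has_derivative
      (\<lambda>v. (?g x \<bullet> ?g' v + ?g' v \<bullet> ?g x) *\<^sub>R ?g x + (?g x \<bullet> ?g x) *\<^sub>R ?g' v)) (at x)"
    apply (rule has_derivative_eq_rhs)
     apply (rule derivative_intros hg)+
    apply (simp add: fun_eq_iff algebra_simps)
    done
  have V: "(\<lambda>y. (norm (sgrad f y))\<^sup>2 *\<^sub>R sgrad f y) = (\<lambda>y. (?g y \<bullet> ?g y) *\<^sub>R ?g y)"
    by (simp add: sgrad_gv power2_norm_eq_inner)
  have "sdiv (\<lambda>y. (norm (sgrad f y))\<^sup>2 *\<^sub>R sgrad f y) x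
     = (\<Sum>b\<in>Basis. ((?g x \<bullet> ?g' (DN x b) + ?g' (DN x b) \<bullet> ?g x) *\<^sub>R ?g x + (?g x \<bullet> ?g x) *\<^sub>R ?g' (DN x b)) \<bullet> b)"
    unfolding V by (rule sdiv_formula[OF xS]) (simp add: Nmap_unit[OF x1] hV)
  also have "\<dots> = (\<Sum>b\<in>Basis. 2 * (\<Sum>c\<in>Basis. ?p b * ?p c * ?h b c) + 3 * F1 ?p ?p * ((b \<bullet> x) * ?p b)
        + F1 ?p ?p * ?h b b)"
  proof (rule sum.cong)
    fix b :: 'a assume b: "b \<in> Basis"
    have gx: "?g x = (\<Sum>c\<in>Basis. ?p c *\<^sub>R c)" by (simp add: gv_def)
    have gd: "?g' (DN x b) = (\<Sum>c\<in>Basis. (?h b c + (b \<bullet> x) * ?p c) *\<^sub>R c)"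
      by (simp add: D2_DN_unit[OF s1 homog0_hext x1])
    have i1: "?g x \<bullet> ?g' (DN x b) = (\<Sum>c\<in>Basis. ?p c * ?h b c) + (b \<bullet> x) * F1 ?p ?p"
      unfolding gx gd inner_vsum_vsum F1_def
      by (simp add: algebra_simps sum.distrib sum_distrib_left)
    have i2: "?g x \<bullet> ?g x = F1 ?p ?p" unfolding gx inner_vsum_vsum F1_def ..
    have i3: "?g x \<bullet> b = ?p b" unfolding gx by (rule inner_vsum_basis[OF b])
    have i4: "?g' (DN x b) \<bullet> b = ?h b b + (b \<bullet> x) * ?p b" unfolding gd by (rule inner_vsum_basis[OF b])
    have "((?g x \<bullet> ?g' (DN x b) + ?g' (DN x b) \<bullet> ?g x) *\<^sub>R ?g x + (?g x \<bullet> ?g x) *\<^sub>R ?g' (DN x b)) \<bullet> b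
       = 2 * (?g x \<bullet> ?g' (DN x b)) * (?g x \<bullet> b) + (?g x \<bullet> ?g x) * (?g' (DN x b) \<bullet> b)"
      by (simp add: inner_add_left inner_commute[of "?g' (DN x b)"])
    also have "\<dots> = 2 * (\<Sum>c\<in>Basis. ?p b * ?p c * ?h b c) + 3 * F1 ?p ?p * ((b \<bullet> x) * ?p b)
        + F1 ?p ?p * ?h b b"
      unfolding i1 i2 i3 i4 by (simp add: algebra_simps sum_distrib_left)
    finally show "((?g x \<bullet> ?g' (DN x b) + ?g' (DN x b) \<bullet> ?g x) *\<^sub>R ?g x + (?g x \<bullet> ?g x) *\<^sub>R ?g' (DN x b)) \<bullet> b
       = 2 * (\<Sum>c\<in>Basis. ?p b * ?p c * ?h b c) + 3 * F1 ?p ?p * ((b \<bullet> x) * ?p b)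
        + F1 ?p ?p * ?h b b" .
  qed simp
  also have "\<dots> = 2 * GHG ?p ?p ?h + 3 * F1 ?p ?p * (\<Sum>b\<in>Basis. (b \<bullet> x) * ?p b) + F1 ?p ?p * TR ?h"
    by (simp add: GHG_def TR_def sum.distrib sum_distrib_left)
  finally show ?thesis using sum_xp by simp
qed

lemma hq: "hext (\<lambda>y. (f y)\<^sup>2) = (\<lambda>y. FF y * FF y)"
  by (simp add: hext_def fun_eq_iff power2_eq_square)

lemma smq: "smk k (hext (\<lambda>y. (f y)\<^sup>2))"
  unfolding hq by (rule smk_mult[OF sm sm])

lemma slap_sq: "y \<in> S0 \<Longrightarrow> slap (\<lambda>y. (f y)\<^sup>2) y = rr y * (\<Sum>b\<in>Basis. D2 (\<lambda>y. FF y * FF y) (Nmap y) b b)"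
  using slap_formula[OF smq] unfolding hq by blast

lemma C4: "slap (\<lambda>y. (f y)\<^sup>2) x = 2 * F1 (D1 FF x) (D1 FF x) + 2 * FF x * TR (D2 FF x)"
proof -
  have "slap (\<lambda>y. (f y)\<^sup>2) x = (\<Sum>b\<in>Basis. D2 (\<lambda>y. FF y * FF y) x b b)"
    using slap_sq[OF xS] by (simp add: rr_unit[OF x1] Nmap_unit[OF x1])
  also have "\<dots> = (\<Sum>b\<in>Basis. 2 * FF x * D2 FF x b b + 2 * (D1 FF x b * D1 FF x b))"
    by (rule sum.cong) (simp_all add: D2_mult[OF sm sm xS] algebra_simps)
  finally show ?thesis by (simp add: F1_def TR_def sum.distrib sum_distrib_left)
qed

lemma x_inner_x: "x \<bullet> x = 1"
  using x1 by (simp add: dot_square_norm)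

lemma DN_x: "DN x b \<bullet> x = 0"
  by (simp add: DN_unit[OF x1] inner_diff_left x_inner_x)

lemma C3: "sdiv (\<lambda>y. slap (\<lambda>z. (f z)\<^sup>2) y *\<^sub>R sgrad f y) x
   = 4 * GHG (D1 FF x) (D1 FF x) (D2 FF x) + 2 * F1 (D1 FF x) (D1 FF x) * TR (D2 FF x)
     + 2 * FF x * T2 (D1 FF x) (D3 FF x)
     + (2 * F1 (D1 FF x) (D1 FF x) + 2 * FF x * TR (D2 FF x)) * TR (D2 FF x)"
proof -
  let ?p = "D1 FF x" and ?h = "D2 FF x" and ?T = "D3 FF x"
  let ?Q = "\<lambda>y. FF y * FF y"
  let ?LQ = "\<lambda>z. \<Sum>b\<in>Basis. D2 ?Q z b b"
  let ?phi = "\<lambda>y. slap (\<lambda>z. (f z)\<^sup>2) y"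
  let ?g = "gv FF" and ?g' = "\<lambda>v. \<Sum>c\<in>Basis. D2 FF x v c *\<^sub>R c"
  have sQ: "smk k ?Q" for k by (rule smk_mult[OF sm sm])
  have s1: "smk (Suc 0) FF" by (rule sm)
  have hLQ: "(?LQ has_derivative (\<lambda>s. \<Sum>b\<in>Basis. D3 ?Q x s b b)) (at x)"
    by (rule has_derivative_sum) (rule hasd2[OF sQ xS])
  have hc: "((\<lambda>y. ?LQ (Nmap y)) has_derivative (\<lambda>s. \<Sum>b\<in>Basis. D3 ?Q x (DN x s) b b)) (at x)"
  proof -
    have hLQ': "(?LQ has_derivative (\<lambda>s. \<Sum>b\<in>Basis. D3 ?Q x s b b)) (at (Nmap x))"
      using hLQ by (simp add: Nmap_unit[OF x1])
    show ?thesis by (rule has_derivative_compose[OF Nmap_hasd[OF xS] hLQ'])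
  qed
  have hp0: "((\<lambda>y. rr y * ?LQ (Nmap y)) has_derivative
       (\<lambda>s. rr x * (\<Sum>b\<in>Basis. D3 ?Q x (DN x s) b b) + (- (s \<bullet> x) * rr x ^ 3) * ?LQ (Nmap x))) (at x)"
    using has_derivative_mult[OF rr_hasd hc] xS by simp
  let ?phi' = "\<lambda>s. rr x * (\<Sum>b\<in>Basis. D3 ?Q x (DN x s) b b) + (- (s \<bullet> x) * rr x ^ 3) * ?LQ (Nmap x)"
  have hp: "(?phi has_derivative ?phi') (at x)"
    by (rule has_derivative_transform_within_open[OF hp0 open_S0 xS]) (simp add: slap_sq)
  have hV: "((\<lambda>y. ?phi y *\<^sub>R ?g y) has_derivative (\<lambda>s. ?phi x *\<^sub>R ?g' s + ?phi' s *\<^sub>R ?g x)) (at x)"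
    by (rule derivative_intros hp gv_hasd[OF s1 xS])+
  have hV2: "((\<lambda>y. ?phi y *\<^sub>R ?g y) has_derivative (\<lambda>s. ?phi x *\<^sub>R ?g' s + ?phi' s *\<^sub>R ?g x)) (at (Nmap x))"
    using hV by (simp only: Nmap_unit[OF x1])
  have V: "(\<lambda>y. slap (\<lambda>z. (f z)\<^sup>2) y *\<^sub>R sgrad f y) = (\<lambda>y. ?phi y *\<^sub>R ?g y)"
    by (simp add: sgrad_gv)
  have phx: "?phi x = 2 * F1 ?p ?p + 2 * FF x * TR ?h" by (rule C4)
  have "sdiv (\<lambda>y. slap (\<lambda>z. (f z)\<^sup>2) y *\<^sub>R sgrad f y) x
      = (\<Sum>b\<in>Basis. (?phi x *\<^sub>R ?g' (DN x b) + ?phi' (DN x b) *\<^sub>R ?g x) \<bullet> b)"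
    unfolding V by (rule sdiv_formula[OF xS hV2])
  also have "\<dots> = (\<Sum>b\<in>Basis. ?phi x * ?h b b + ?phi x * ((b \<bullet> x) * ?p b)
          + ?p b * (\<Sum>d\<in>Basis. D3 ?Q x b d d) - ((b \<bullet> x) * ?p b) * (\<Sum>d\<in>Basis. D3 ?Q x x d d))"
  proof (rule sum.cong)
    fix b :: 'a assume b: "b \<in> Basis"
    have gx: "?g x = (\<Sum>c\<in>Basis. ?p c *\<^sub>R c)" by (simp add: gv_def)
    have gd: "?g' (DN x b) = (\<Sum>c\<in>Basis. (?h b c + (b \<bullet> x) * ?p c) *\<^sub>R c)"
      by (simp add: D2_DN_unit[OF s1 homog0_hext x1])
    have i3: "?g x \<bullet> b = ?p b" unfolding gx by (rule inner_vsum_basis[OF b])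
    have i4: "?g' (DN x b) \<bullet> b = ?h b b + (b \<bullet> x) * ?p b" unfolding gd by (rule inner_vsum_basis[OF b])
    have dd: "DN x (DN x b) = DN x b" by (simp add: DN_unit[OF x1] DN_x[unfolded DN_unit[OF x1]])
    have d3: "D3 ?Q x (DN x b) d d = D3 ?Q x b d d - (b \<bullet> x) * D3 ?Q x x d d" for d
      using linear_diff[OF lin_D3[OF sQ xS]] linear_scale[OF lin_D3[OF sQ xS]]
      by (simp add: DN_unit[OF x1])
    have ph': "?phi' (DN x b) = (\<Sum>d\<in>Basis. D3 ?Q x b d d) - (b \<bullet> x) * (\<Sum>d\<in>Basis. D3 ?Q x x d d)"
      by (simp add: rr_unit[OF x1] DN_x dd d3 sum_subtractf sum_distrib_left)
    show "(?phi x *\<^sub>R ?g' (DN x b) + ?phi' (DN x b) *\<^sub>R ?g x) \<bullet> b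
       = ?phi x * ?h b b + ?phi x * ((b \<bullet> x) * ?p b)
          + ?p b * (\<Sum>d\<in>Basis. D3 ?Q x b d d) - ((b \<bullet> x) * ?p b) * (\<Sum>d\<in>Basis. D3 ?Q x x d d)"
      by (simp add: inner_add_left i3 i4 rr_unit[OF x1] DN_x dd d3 sum_subtractf sum_distrib_left algebra_simps)
  qed simp
  also have "\<dots> = ?phi x * TR ?h + ?phi x * (\<Sum>b\<in>Basis. (b \<bullet> x) * ?p b)
       + (\<Sum>b\<in>Basis. ?p b * (\<Sum>d\<in>Basis. D3 ?Q x b d d))
       - (\<Sum>b\<in>Basis. (b \<bullet> x) * ?p b) * (\<Sum>d\<in>Basis. D3 ?Q x x d d)"
    by (simp only: TR_def sum.distrib sum_subtractf sum_distrib_left[symmetric] sum_distrib_right[symmetric])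
  also have "(\<Sum>b\<in>Basis. ?p b * (\<Sum>d\<in>Basis. D3 ?Q x b d d))
      = (\<Sum>b\<in>Basis. \<Sum>d\<in>Basis. 2 * FF x * (?p b * ?T b d d) + 2 * (?p b * ?p b) * ?h d d + 4 * (?p b * ?p d * ?h b d))"
    by (rule sum.cong, simp, simp add: sum_distrib_left, rule sum.cong)
       (simp_all add: D3_mult[OF sm sm xS] algebra_simps)
  also have "\<dots> = 2 * FF x * T2 ?p ?T + 2 * F1 ?p ?p * TR ?h + 4 * GHG ?p ?p ?h"
    by (simp add: T2_def F1_def TR_def GHG_def sum.distrib sum_distrib_left sum_distrib_right algebra_simps)
  finally show ?thesis using sum_xp phx by (simp add: algebra_simps)
qed

definition eta :: "('a::euclidean_space \<Rightarrow> real) \<Rightarrow> 'a \<Rightarrow> real" where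
  "eta F y = (\<Sum>c\<in>Basis. D1 F y c * D1 F y c)"

lemma smk_eta: "smk k (eta FF)"
  unfolding eta_def[abs_def] by (intro smk_sum finite_Basis smk_mult smk_D1 sm)

lemma D1_eta: "D1 (eta FF) x w = 2 * (\<Sum>c\<in>Basis. D1 FF x c * D2 FF x w c)"
proof -
  have "D1 (eta FF) x w = (\<Sum>c\<in>Basis. D2 FF x w c * D1 FF x c + D1 FF x c * D2 FF x w c)"
    unfolding eta_def[abs_def]
    by (subst D1_sum[OF finite_Basis _ xS], intro smk_mult smk_D1 sm)
       (simp add: D1_mult[OF smk_D1[OF sm] smk_D1[OF sm] xS] D1_of_D1)
  then show ?thesis by (simp add: sum_distrib_left algebra_simps)
qed

lemma D2_eta: "D2 (eta FF) x v w = (\<Sum>c\<in>Basis. 2 * (D3 FF x v w c * D1 FF x c) + 2 * (D2 FF x w c * D2 FF x v c))"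
  unfolding eta_def[abs_def]
  by (subst D2_sum[OF finite_Basis _ xS], intro smk_mult smk_D1 sm)
     (simp add: D2_mult[OF smk_D1[OF sm] smk_D1[OF sm] xS] D1_of_D1 D2_of_D1 algebra_simps)

lemma hext_normsq: "y \<in> S0 \<Longrightarrow> hext (\<lambda>y. (norm (sgrad f y))\<^sup>2) y = rho y * eta FF y"
proof -
  assume y: "y \<in> S0"
  have r: "rr y > 0" using y by (simp add: rr_def)
  have "hext (\<lambda>y. (norm (sgrad f y))\<^sup>2) y = (norm (gv FF (Nmap y)))\<^sup>2"
    by (simp add: hext_comp sgrad_gv)
  also have "\<dots> = (\<Sum>c\<in>Basis. D1 FF (rr y *\<^sub>R y) c * D1 FF (rr y *\<^sub>R y) c)"
    by (simp add: power2_norm_eq_inner gv_def inner_vsum_vsum Nmap_rr)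
  also have "\<dots> = (\<Sum>c\<in>Basis. (D1 FF y c / rr y) * (D1 FF y c / rr y))"
    by (simp add: euler0[OF sm homog0_hext y r])
  also have "\<dots> = (1 / rr y)\<^sup>2 * eta FF y"
    by (simp add: eta_def sum_distrib_left power2_eq_square field_simps)
  also have "(1 / rr y)\<^sup>2 = rho y"
    by (simp add: rr_def rho_eq dot_square_norm divide_inverse)
  finally show ?thesis .
qed

lemma C2: "slap (\<lambda>y. (norm (sgrad f y))\<^sup>2) x
   = (2 * real DIM('a) - 8) * F1 (D1 FF x) (D1 FF x) + 2 * HH (D2 FF x) (D2 FF x) + 2 * T1 (D1 FF x) (D3 FF x)"
proof -
  let ?p = "D1 FF x" and ?h = "D2 FF x" and ?T = "D3 FF x"
  let ?nsq = "\<lambda>y. (norm (sgrad f y))\<^sup>2"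
  have sQ: "smk k (\<lambda>y. rho y * eta FF y)" for k by (rule smk_mult[OF smk_rho smk_eta])
  have sh: "smk k (hext ?nsq)" for k
    by (rule smk_cong[OF sQ]) (simp add: hext_normsq)
  have "slap ?nsq x = (\<Sum>b\<in>Basis. D2 (hext ?nsq) x b b)"
    using slap_formula[OF sh xS] by (simp add: rr_unit[OF x1] Nmap_unit[OF x1])
  also have "\<dots> = (\<Sum>b\<in>Basis. D2 (\<lambda>y. rho y * eta FF y) x b b)"
    by (rule sum.cong[OF refl]) (rule D2_cong[OF xS hext_normsq])
  also have "\<dots> = (\<Sum>b\<in>Basis. 2 * F1 ?p ?p + 8 * ((x \<bullet> b) * (\<Sum>c\<in>Basis. ?p c * ?h b c))
       + (\<Sum>c\<in>Basis. 2 * (?T b b c * ?p c) + 2 * (?h b c * ?h b c)))"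
  proof (rule sum.cong)
    fix b :: 'a assume b: "b \<in> Basis"
    have rx: "rho x = 1" by (simp add: rho_eq x_inner_x)
    have ex: "eta FF x = F1 ?p ?p" by (simp add: eta_def F1_def)
    show "D2 (\<lambda>y. rho y * eta FF y) x b b = 2 * F1 ?p ?p + 8 * ((x \<bullet> b) * (\<Sum>c\<in>Basis. ?p c * ?h b c))
       + (\<Sum>c\<in>Basis. 2 * (?T b b c * ?p c) + 2 * (?h b c * ?h b c))"
      using b by (simp add: D2_mult[OF smk_rho smk_eta xS] D2_rho[OF xS] D1_rho[OF xS] D1_eta D2_eta rx ex
          inner_Basis algebra_simps)
  qed simp
  also have "\<dots> = 2 * real DIM('a) * F1 ?p ?p + 8 * (\<Sum>b\<in>Basis. (x \<bullet> b) * (\<Sum>c\<in>Basis. ?p c * ?h b c))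
      + 2 * T1 ?p ?T + 2 * HH ?h ?h"
  proof -
    have t1: "(\<Sum>b\<in>Basis. \<Sum>c\<in>Basis. 2 * (?T b b c * ?p c)) = 2 * T1 ?p ?T"
      unfolding T1_def sum_distrib_left by (subst sum.swap) (simp add: algebra_simps)
    show ?thesis using t1 by (simp add: sum.distrib HH_def sum_distrib_left algebra_simps)
  qed
  also have "(\<Sum>b\<in>Basis. (x \<bullet> b) * (\<Sum>c\<in>Basis. ?p c * ?h b c)) = - F1 ?p ?p"
  proof -
    have "(\<Sum>b\<in>Basis. (x \<bullet> b) * (\<Sum>c\<in>Basis. ?p c * ?h b c))
        = (\<Sum>c\<in>Basis. ?p c * (\<Sum>b\<in>Basis. (x \<bullet> b) * ?h b c))"
      unfolding sum_distrib_left by (subst sum.swap) (simp add: algebra_simps)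
    also have "\<dots> = (\<Sum>c\<in>Basis. ?p c * (- ?p c))"
      using euler2_sum[OF sm homog0_hext xS] by simp
    finally show ?thesis by (simp add: F1_def sum_negf)
  qed
  finally show ?thesis by (simp add: algebra_simps)
qed

lemma Lsig2_diag_Psi:
  "Lsig2_diag n f x = Psi (real DIM('a)) n (f x) (D1 FF x) (D2 FF x) (D3 FF x)"
proof -
  have fx: "FF x = f x" by (rule hext_unit[OF x1])
  show ?thesis
    unfolding Lsig2_diag_def Psi_def C1 C2 C3 C4[folded fx] fx
    by (simp add: fx)
qed

end



lemma F1_add1: "F1 (\<lambda>c. p c + q c) r = F1 p r + F1 q r"
  by (simp add: F1_def algebra_simps sum.distrib)
lemma F1_add2: "F1 r (\<lambda>c. p c + q c) = F1 r p + F1 r q"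
  by (simp add: F1_def algebra_simps sum.distrib)
lemma GHG_add1: "GHG (\<lambda>c. p c + q c) r h = GHG p r h + GHG q r h"
  by (simp add: GHG_def algebra_simps sum.distrib)
lemma GHG_add2: "GHG r (\<lambda>c. p c + q c) h = GHG r p h + GHG r q h"
  by (simp add: GHG_def algebra_simps sum.distrib)
lemma GHG_add3: "GHG r s (\<lambda>b c. h b c + k b c) = GHG r s h + GHG r s k"
  by (simp add: GHG_def algebra_simps sum.distrib)
lemma TR_add: "TR (\<lambda>b c. h b c + k b c) = TR h + TR k"
  by (simp add: TR_def sum.distrib)
lemma HH_add1: "HH (\<lambda>b c. h b c + k b c) l = HH h l + HH k l"
  by (simp add: HH_def algebra_simps sum.distrib)
lemma HH_add2: "HH l (\<lambda>b c. h b c + k b c) = HH l h + HH l k"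
  by (simp add: HH_def algebra_simps sum.distrib)
lemma T1_add1: "T1 (\<lambda>c. p c + q c) T = T1 p T + T1 q T"
  by (simp add: T1_def algebra_simps sum.distrib)
lemma T1_add2: "T1 p (\<lambda>s v w. T s v w + S s v w) = T1 p T + T1 p S"
  by (simp add: T1_def algebra_simps sum.distrib)
lemma T2_add1: "T2 (\<lambda>c. p c + q c) T = T2 p T + T2 q T"
  by (simp add: T2_def algebra_simps sum.distrib)
lemma T2_add2: "T2 p (\<lambda>s v w. T s v w + S s v w) = T2 p T + T2 p S"
  by (simp add: T2_def algebra_simps sum.distrib)

lemmas form_add = F1_add1 F1_add2 GHG_add1 GHG_add2 GHG_add3 TR_add HH_add1 HH_add2
  T1_add1 T1_add2 T2_add1 T2_add2


definition "m1 (v::real) p h (T::'a::euclidean_space \<Rightarrow> 'a \<Rightarrow> 'a \<Rightarrow> real) = GHG p p h"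
definition "m2 (v::real) p h (T::'a::euclidean_space \<Rightarrow> 'a \<Rightarrow> 'a \<Rightarrow> real) = F1 p p * TR h"
definition "m3 (v::real) p (h::'a::euclidean_space \<Rightarrow> 'a \<Rightarrow> real) (T::'a \<Rightarrow> 'a \<Rightarrow> 'a \<Rightarrow> real) = v * F1 p p"
definition "m4 (v::real) (p::'a::euclidean_space \<Rightarrow> real) h (T::'a \<Rightarrow> 'a \<Rightarrow> 'a \<Rightarrow> real) = v * HH h h"
definition "m5 (v::real) p (h::'a::euclidean_space \<Rightarrow> 'a \<Rightarrow> real) T = v * T1 p T"
definition "m6 (v::real) p (h::'a::euclidean_space \<Rightarrow> 'a \<Rightarrow> real) T = v * T2 p T"
definition "m7 (v::real) (p::'a::euclidean_space \<Rightarrow> real) h (T::'a \<Rightarrow> 'a \<Rightarrow> 'a \<Rightarrow> real) = v * TR h * TR h"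
definition "m8 (v::real) (p::'a::euclidean_space \<Rightarrow> real) h (T::'a \<Rightarrow> 'a \<Rightarrow> 'a \<Rightarrow> real) = v * v * TR h"
definition "m9 (v::real) (p::'a::euclidean_space \<Rightarrow> real) (h::'a \<Rightarrow> 'a \<Rightarrow> real) (T::'a \<Rightarrow> 'a \<Rightarrow> 'a \<Rightarrow> real) = v * v * v"

lemma Psi_mono: "Psi d n v p h T =
    m1 v p h T + m2 v p h T / 2
  - (n - 4) / 16 * ((2 * d - 8) * m3 v p h T + 2 * m4 v p h T + 2 * m5 v p h T
       - 4 * m1 v p h T - 4 * m2 v p h T - 2 * m6 v p h T - 2 * m7 v p h T)
  - (n - 1) / 4 * ((n - 4) / 4)\<^sup>2 * (2 * m3 v p h T + 2 * m8 v p h T)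
  + n * (n - 1) / 8 * ((n - 4) / 4) ^ 3 * m9 v p h T"
  unfolding Psi_def m1_def m2_def m3_def m4_def m5_def m6_def m7_def m8_def m9_def
  by (simp add: algebra_simps power3_eq_cube)

definition "dm1 va pa ha (Ta::'a::euclidean_space \<Rightarrow> 'a \<Rightarrow> 'a \<Rightarrow> real) (v::real) p h (T::'a \<Rightarrow> 'a \<Rightarrow> 'a \<Rightarrow> real)
   = GHG pa p h + GHG p pa h + GHG p p ha"
definition "dm2 va pa ha (Ta::'a::euclidean_space \<Rightarrow> 'a \<Rightarrow> 'a \<Rightarrow> real) (v::real) p h (T::'a \<Rightarrow> 'a \<Rightarrow> 'a \<Rightarrow> real)
   = (F1 pa p + F1 p pa) * TR h + F1 p p * TR ha"
definition "dm3 va pa (ha::'a::euclidean_space \<Rightarrow> 'a \<Rightarrow> real) (Ta::'a \<Rightarrow> 'a \<Rightarrow> 'a \<Rightarrow> real) (v::real) p (h::'a \<Rightarrow> 'a \<Rightarrow> real) (T::'a \<Rightarrow> 'a \<Rightarrow> 'a \<Rightarrow> real)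
   = va * F1 p p + v * (F1 pa p + F1 p pa)"
definition "dm4 va (pa::'a::euclidean_space \<Rightarrow> real) ha (Ta::'a \<Rightarrow> 'a \<Rightarrow> 'a \<Rightarrow> real) (v::real) (p::'a \<Rightarrow> real) h (T::'a \<Rightarrow> 'a \<Rightarrow> 'a \<Rightarrow> real)
   = va * HH h h + v * (HH ha h + HH h ha)"
definition "dm5 va pa (ha::'a::euclidean_space \<Rightarrow> 'a \<Rightarrow> real) Ta (v::real) p (h::'a \<Rightarrow> 'a \<Rightarrow> real) T
   = va * T1 p T + v * (T1 pa T + T1 p Ta)"
definition "dm6 va pa (ha::'a::euclidean_space \<Rightarrow> 'a \<Rightarrow> real) Ta (v::real) p (h::'a \<Rightarrow> 'a \<Rightarrow> real) T
   = va * T2 p T + v * (T2 pa T + T2 p Ta)"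
definition "dm7 va (pa::'a::euclidean_space \<Rightarrow> real) ha (Ta::'a \<Rightarrow> 'a \<Rightarrow> 'a \<Rightarrow> real) (v::real) (p::'a \<Rightarrow> real) h (T::'a \<Rightarrow> 'a \<Rightarrow> 'a \<Rightarrow> real)
   = va * TR h * TR h + 2 * v * TR ha * TR h"
definition "dm8 va (pa::'a::euclidean_space \<Rightarrow> real) ha (Ta::'a \<Rightarrow> 'a \<Rightarrow> 'a \<Rightarrow> real) (v::real) (p::'a \<Rightarrow> real) h (T::'a \<Rightarrow> 'a \<Rightarrow> 'a \<Rightarrow> real)
   = 2 * va * v * TR h + v * v * TR ha"
definition "dm9 va (pa::'a::euclidean_space \<Rightarrow> real) (ha::'a \<Rightarrow> 'a \<Rightarrow> real) (Ta::'a \<Rightarrow> 'a \<Rightarrow> 'a \<Rightarrow> real) (v::real) (p::'a \<Rightarrow> real) (h::'a \<Rightarrow> 'a \<Rightarrow> real) (T::'a \<Rightarrow> 'a \<Rightarrow> 'a \<Rightarrow> real)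
   = 3 * v * v * va"

definition DPsi where
  "DPsi d n va pa ha Ta v p h T =
    dm1 va pa ha Ta v p h T + dm2 va pa ha Ta v p h T / 2
  - (n - 4) / 16 * ((2 * d - 8) * dm3 va pa ha Ta v p h T + 2 * dm4 va pa ha Ta v p h T + 2 * dm5 va pa ha Ta v p h T
       - 4 * dm1 va pa ha Ta v p h T - 4 * dm2 va pa ha Ta v p h T - 2 * dm6 va pa ha Ta v p h T - 2 * dm7 va pa ha Ta v p h T)
  - (n - 1) / 4 * ((n - 4) / 4)\<^sup>2 * (2 * dm3 va pa ha Ta v p h T + 2 * dm8 va pa ha Ta v p h T)
  + n * (n - 1) / 8 * ((n - 4) / 4) ^ 3 * dm9 va pa ha Ta v p h T"

lemma m1_pol: "m1 (va + vb + vb) (\<lambda>c. pa c + pb c + pb c) (\<lambda>b c. ha b c + hb b c + hb b c)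
       (\<lambda>s v w. Ta s v w + Tb s v w + Tb s v w)
  = 2 * m1 (va + vb) (\<lambda>c. pa c + pb c) (\<lambda>b c. ha b c + hb b c) (\<lambda>s v w. Ta s v w + Tb s v w)
  + m1 (vb + vb) (\<lambda>c. pb c + pb c) (\<lambda>b c. hb b c + hb b c) (\<lambda>s v w. Tb s v w + Tb s v w)
  - m1 va pa ha Ta - 2 * m1 vb pb hb Tb + 2 * dm1 va pa ha Ta vb pb hb Tb"
  unfolding m1_def dm1_def form_add by (simp add: algebra_simps)

lemma m2_pol: "m2 (va + vb + vb) (\<lambda>c. pa c + pb c + pb c) (\<lambda>b c. ha b c + hb b c + hb b c)
       (\<lambda>s v w. Ta s v w + Tb s v w + Tb s v w)
  = 2 * m2 (va + vb) (\<lambda>c. pa c + pb c) (\<lambda>b c. ha b c + hb b c) (\<lambda>s v w. Ta s v w + Tb s v w)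
  + m2 (vb + vb) (\<lambda>c. pb c + pb c) (\<lambda>b c. hb b c + hb b c) (\<lambda>s v w. Tb s v w + Tb s v w)
  - m2 va pa ha Ta - 2 * m2 vb pb hb Tb + 2 * dm2 va pa ha Ta vb pb hb Tb"
  unfolding m2_def dm2_def form_add by (simp add: algebra_simps)

lemma m3_pol: "m3 (va + vb + vb) (\<lambda>c. pa c + pb c + pb c) (\<lambda>b c. ha b c + hb b c + hb b c)
       (\<lambda>s v w. Ta s v w + Tb s v w + Tb s v w)
  = 2 * m3 (va + vb) (\<lambda>c. pa c + pb c) (\<lambda>b c. ha b c + hb b c) (\<lambda>s v w. Ta s v w + Tb s v w)
  + m3 (vb + vb) (\<lambda>c. pb c + pb c) (\<lambda>b c. hb b c + hb b c) (\<lambda>s v w. Tb s v w + Tb s v w)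
  - m3 va pa ha Ta - 2 * m3 vb pb hb Tb + 2 * dm3 va pa ha Ta vb pb hb Tb"
  unfolding m3_def dm3_def form_add by (simp add: algebra_simps)

lemma m4_pol: "m4 (va + vb + vb) (\<lambda>c. pa c + pb c + pb c) (\<lambda>b c. ha b c + hb b c + hb b c)
       (\<lambda>s v w. Ta s v w + Tb s v w + Tb s v w)
  = 2 * m4 (va + vb) (\<lambda>c. pa c + pb c) (\<lambda>b c. ha b c + hb b c) (\<lambda>s v w. Ta s v w + Tb s v w)
  + m4 (vb + vb) (\<lambda>c. pb c + pb c) (\<lambda>b c. hb b c + hb b c) (\<lambda>s v w. Tb s v w + Tb s v w)
  - m4 va pa ha Ta - 2 * m4 vb pb hb Tb + 2 * dm4 va pa ha Ta vb pb hb Tb"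
  unfolding m4_def dm4_def form_add by (simp add: algebra_simps)

lemma m5_pol: "m5 (va + vb + vb) (\<lambda>c. pa c + pb c + pb c) (\<lambda>b c. ha b c + hb b c + hb b c)
       (\<lambda>s v w. Ta s v w + Tb s v w + Tb s v w)
  = 2 * m5 (va + vb) (\<lambda>c. pa c + pb c) (\<lambda>b c. ha b c + hb b c) (\<lambda>s v w. Ta s v w + Tb s v w)
  + m5 (vb + vb) (\<lambda>c. pb c + pb c) (\<lambda>b c. hb b c + hb b c) (\<lambda>s v w. Tb s v w + Tb s v w)
  - m5 va pa ha Ta - 2 * m5 vb pb hb Tb + 2 * dm5 va pa ha Ta vb pb hb Tb"
  unfolding m5_def dm5_def form_add by (simp add: algebra_simps)

lemma m6_pol: "m6 (va + vb + vb) (\<lambda>c. pa c + pb c + pb c) (\<lambda>b c. ha b c + hb b c + hb b c)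
       (\<lambda>s v w. Ta s v w + Tb s v w + Tb s v w)
  = 2 * m6 (va + vb) (\<lambda>c. pa c + pb c) (\<lambda>b c. ha b c + hb b c) (\<lambda>s v w. Ta s v w + Tb s v w)
  + m6 (vb + vb) (\<lambda>c. pb c + pb c) (\<lambda>b c. hb b c + hb b c) (\<lambda>s v w. Tb s v w + Tb s v w)
  - m6 va pa ha Ta - 2 * m6 vb pb hb Tb + 2 * dm6 va pa ha Ta vb pb hb Tb"
  unfolding m6_def dm6_def form_add by (simp add: algebra_simps)

lemma m7_pol: "m7 (va + vb + vb) (\<lambda>c. pa c + pb c + pb c) (\<lambda>b c. ha b c + hb b c + hb b c)
       (\<lambda>s v w. Ta s v w + Tb s v w + Tb s v w)
  = 2 * m7 (va + vb) (\<lambda>c. pa c + pb c) (\<lambda>b c. ha b c + hb b c) (\<lambda>s v w. Ta s v w + Tb s v w)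
  + m7 (vb + vb) (\<lambda>c. pb c + pb c) (\<lambda>b c. hb b c + hb b c) (\<lambda>s v w. Tb s v w + Tb s v w)
  - m7 va pa ha Ta - 2 * m7 vb pb hb Tb + 2 * dm7 va pa ha Ta vb pb hb Tb"
  unfolding m7_def dm7_def form_add by (simp add: algebra_simps)

lemma m8_pol: "m8 (va + vb + vb) (\<lambda>c. pa c + pb c + pb c) (\<lambda>b c. ha b c + hb b c + hb b c)
       (\<lambda>s v w. Ta s v w + Tb s v w + Tb s v w)
  = 2 * m8 (va + vb) (\<lambda>c. pa c + pb c) (\<lambda>b c. ha b c + hb b c) (\<lambda>s v w. Ta s v w + Tb s v w)
  + m8 (vb + vb) (\<lambda>c. pb c + pb c) (\<lambda>b c. hb b c + hb b c) (\<lambda>s v w. Tb s v w + Tb s v w)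
  - m8 va pa ha Ta - 2 * m8 vb pb hb Tb + 2 * dm8 va pa ha Ta vb pb hb Tb"
  unfolding m8_def dm8_def form_add by (simp add: algebra_simps)

lemma m9_pol: "m9 (va + vb + vb) (\<lambda>c. pa c + pb c + pb c) (\<lambda>b c. ha b c + hb b c + hb b c)
       (\<lambda>s v w. Ta s v w + Tb s v w + Tb s v w)
  = 2 * m9 (va + vb) (\<lambda>c. pa c + pb c) (\<lambda>b c. ha b c + hb b c) (\<lambda>s v w. Ta s v w + Tb s v w)
  + m9 (vb + vb) (\<lambda>c. pb c + pb c) (\<lambda>b c. hb b c + hb b c) (\<lambda>s v w. Tb s v w + Tb s v w)
  - m9 va pa ha Ta - 2 * m9 vb pb hb Tb + 2 * dm9 va pa ha Ta vb pb hb Tb"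
  unfolding m9_def dm9_def form_add by (simp add: algebra_simps)

definition "PsiG a b c E v p h T =
    m1 v p h T + m2 v p h T / 2
  - a * (E * m3 v p h T + 2 * m4 v p h T + 2 * m5 v p h T
       - 4 * m1 v p h T - 4 * m2 v p h T - 2 * m6 v p h T - 2 * m7 v p h T)
  - b * (2 * m3 v p h T + 2 * m8 v p h T)
  + c * m9 v p h T"

definition "DPsiG a b c E va pa ha Ta v p h T =
    dm1 va pa ha Ta v p h T + dm2 va pa ha Ta v p h T / 2
  - a * (E * dm3 va pa ha Ta v p h T + 2 * dm4 va pa ha Ta v p h T + 2 * dm5 va pa ha Ta v p h T
       - 4 * dm1 va pa ha Ta v p h T - 4 * dm2 va pa ha Ta v p h T - 2 * dm6 va pa ha Ta v p h T - 2 * dm7 va pa ha Ta v p h T)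
  - b * (2 * dm3 va pa ha Ta v p h T + 2 * dm8 va pa ha Ta v p h T)
  + c * dm9 va pa ha Ta v p h T"

lemma Psi_G: "Psi d n v p h T = PsiG ((n - 4) / 16) ((n - 1) / 4 * ((n - 4) / 4)\<^sup>2) (n * (n - 1) / 8 * ((n - 4) / 4) ^ 3) (2 * d - 8) v p h T"
  unfolding Psi_mono PsiG_def ..

lemma DPsi_G: "DPsi d n va pa ha Ta v p h T = DPsiG ((n - 4) / 16) ((n - 1) / 4 * ((n - 4) / 4)\<^sup>2) (n * (n - 1) / 8 * ((n - 4) / 4) ^ 3) (2 * d - 8) va pa ha Ta v p h T"
  unfolding DPsi_def DPsiG_def ..

lemma polar_arith:
  fixes a b c E :: real
  shows "(((2 * Y1 + Z1 - A1 - 2 * B1 + 2 * W1) + (2 * Y2 + Z2 - A2 - 2 * B2 + 2 * W2) / 2 - a * (E * (2 * Y3 + Z3 - A3 - 2 * B3 + 2 * W3) + 2 * (2 * Y4 + Z4 - A4 - 2 * B4 + 2 * W4) + 2 * (2 * Y5 + Z5 - A5 - 2 * B5 + 2 * W5) - 4 * (2 * Y1 + Z1 - A1 - 2 * B1 + 2 * W1) - 4 * (2 * Y2 + Z2 - A2 - 2 * B2 + 2 * W2) - 2 * (2 * Y6 + Z6 - A6 - 2 * B6 + 2 * W6) - 2 * (2 * Y7 + Z7 - A7 - 2 * B7 + 2 * W7)) - b * (2 * (2 * Y3 + Z3 - A3 - 2 * B3 + 2 * W3) + 2 * (2 * Y8 + Z8 - A8 - 2 * B8 + 2 * W8)) +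 c * (2 * Y9 + Z9 - A9 - 2 * B9 + 2 * W9)) - (Y1 + Y2 / 2 - a * (E * Y3 + 2 * Y4 + 2 * Y5 - 4 * Y1 - 4 * Y2 - 2 * Y6 - 2 * Y7) - b * (2 * Y3 + 2 * Y8) + c * Y9) - (Y1 + Y2 / 2 - a * (E * Y3 + 2 * Y4 + 2 * Y5 - 4 * Y1 - 4 * Y2 - 2 * Y6 - 2 * Y7) - b * (2 * Y3 + 2 * Y8) + c * Y9) - (Z1 + Z2 / 2 - a * (E * Z3 + 2 * Z4 + 2 * Z5 - 4 * Z1 - 4 * Z2 - 2 * Z6 - 2 * Z7) - b * (2 * Z3 + 2 * Z8) + c * Z9) + (A1 + A2 / 2 - a * (E * A3 + 2 * A4 + 2 * A5 - 4 * A1 - 4 * A2 - 2 * A6 - 2 * A7) - b * (2 * A3 + 2 * A8) + c * A9) + (B1 + B2 / 2 - a * (E * B3 + 2 * B4 + 2 * B5 - 4 * B1 - 4 * B2 - 2 * B6 - 2 * B7) - b * (2 * B3 + 2 * B8) + c * B9) + (B1 + B2 / 2 - a * (E * B3 + 2 * B4 + 2 * B5 - 4 * B1 - 4 * B2 - 2 * B6 - 2 * B7) - b * (2 * B3 + 2 * B8) + c * B9)) / 6 = (W1 + W2 / 2 - a * (E * W3 + 2 * W4 + 2 * W5 - 4 * W1 - 4 * W2 - 2 * W6 - 2 * W7) - b * (2 * W3 + 2 * W8) + c * W9) / 3"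
  by (simp add: field_simps)

lemma polarG:
  "(PsiG a b c E (va + vb + vb) (\<lambda>c. pa c + pb c + pb c) (\<lambda>b c. ha b c + hb b c + hb b c)
       (\<lambda>s v w. Ta s v w + Tb s v w + Tb s v w)
   - PsiG a b c E (va + vb) (\<lambda>c. pa c + pb c) (\<lambda>b c. ha b c + hb b c) (\<lambda>s v w. Ta s v w + Tb s v w)
   - PsiG a b c E (va + vb) (\<lambda>c. pa c + pb c) (\<lambda>b c. ha b c + hb b c) (\<lambda>s v w. Ta s v w + Tb s v w)
   - PsiG a b c E (vb + vb) (\<lambda>c. pb c + pb c) (\<lambda>b c. hb b c + hb b c) (\<lambda>s v w. Tb s v w + Tb s v w)
   + PsiG a b c E va pa ha Ta + PsiG a b c E vb pb hb Tb + PsiG a b c E vb pb hb Tb) / 6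
  = DPsiG a b c E va pa ha Ta vb pb hb Tb / 3"
  unfolding PsiG_def DPsiG_def
  unfolding m1_pol m2_pol m3_pol m4_pol m5_pol m6_pol m7_pol m8_pol m9_pol
  by (rule polar_arith)

lemma polar:
  "(Psi d n (va + vb + vb) (\<lambda>c. pa c + pb c + pb c) (\<lambda>b c. ha b c + hb b c + hb b c)
       (\<lambda>s v w. Ta s v w + Tb s v w + Tb s v w)
   - Psi d n (va + vb) (\<lambda>c. pa c + pb c) (\<lambda>b c. ha b c + hb b c) (\<lambda>s v w. Ta s v w + Tb s v w)
   - Psi d n (va + vb) (\<lambda>c. pa c + pb c) (\<lambda>b c. ha b c + hb b c) (\<lambda>s v w. Ta s v w + Tb s v w)
   - Psi d n (vb + vb) (\<lambda>c. pb c + pb c) (\<lambda>b c. hb b c + hb b c) (\<lambda>s v w. Tb s v w + Tb s v w)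
   + Psi d n va pa ha Ta + Psi d n vb pb hb Tb + Psi d n vb pb hb Tb) / 6
  = DPsi d n va pa ha Ta vb pb hb Tb / 3"
  unfolding Psi_G DPsi_G by (rule polarG)



lemma D3_coord: "D3 (\<lambda>z. z \<bullet> e) y s v w = 0"
  by (simp add: D3_def D2_coord D1_const)

lemma D2_rr:
  assumes y: "y \<in> S0"
  shows "D2 rr y v w = 3 * (w \<bullet> y) * (v \<bullet> y) * rr y ^ 5 - (v \<bullet> w) * rr y ^ 3"
proof -
  have "D2 rr y v w = D1 (\<lambda>z. - (w \<bullet> z) * rr z ^ 3) y v"
    unfolding D2_def by (rule fun_cong[OF D1_cong[OF y]]) (simp add: D1_rr inner_commute)
  also have "\<dots> = 3 * (w \<bullet> y) * (v \<bullet> y) * rr y ^ 5 - (v \<bullet> w) * rr y ^ 3"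
  proof (rule D1_eqI)
    show "((\<lambda>z. - (w \<bullet> z) * rr z ^ 3) has_derivative (\<lambda>v. 3 * (w \<bullet> y) * (v \<bullet> y) * rr y ^ 5 - (v \<bullet> w) * rr y ^ 3)) (at y)"
      using y apply -
      apply (rule has_derivative_eq_rhs)
       apply (rule derivative_intros rr_hasd | simp)+
      apply (simp add: fun_eq_iff algebra_simps inner_commute power2_eq_square power3_eq_cube)
      apply (simp add: eval_nat_numeral)
      done
  qed
  finally show ?thesis .
qed

lemma D3_rr:
  assumes x1: "norm x = 1"
  shows "D3 rr x s v w = 3 * (v \<bullet> s) * (w \<bullet> x) + 3 * (v \<bullet> x) * (w \<bullet> s) + 3 * (v \<bullet> w) * (s \<bullet> x)
     - 15 * (s \<bullet> x) * (v \<bullet> x) * (w \<bullet> x)"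
proof -
  have xS: "x \<in> S0" using x1 by auto
  have "D3 rr x s v w = D1 (\<lambda>z. 3 * (w \<bullet> z) * (v \<bullet> z) * rr z ^ 5 - (v \<bullet> w) * rr z ^ 3) x s"
    unfolding D3_def by (rule fun_cong[OF D1_cong[OF xS]]) (simp add: D2_rr)
  also have "\<dots> = 3 * (v \<bullet> s) * (w \<bullet> x) + 3 * (v \<bullet> x) * (w \<bullet> s) + 3 * (v \<bullet> w) * (s \<bullet> x)
     - 15 * (s \<bullet> x) * (v \<bullet> x) * (w \<bullet> x)"
  proof (rule D1_eqI)
    have r: "rr x = 1" by (rule rr_unit[OF x1])
    show "((\<lambda>z. 3 * (w \<bullet> z) * (v \<bullet> z) * rr z ^ 5 - (v \<bullet> w) * rr z ^ 3) has_derivative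
      (\<lambda>s. 3 * (v \<bullet> s) * (w \<bullet> x) + 3 * (v \<bullet> x) * (w \<bullet> s) + 3 * (v \<bullet> w) * (s \<bullet> x)
     - 15 * (s \<bullet> x) * (v \<bullet> x) * (w \<bullet> x))) (at x)"
      using xS apply -
      apply (rule has_derivative_eq_rhs)
       apply (rule derivative_intros rr_hasd | simp)+
      apply (simp add: fun_eq_iff algebra_simps inner_commute r)
      done
  qed
  finally show ?thesis .
qed

definition NN :: "'a::euclidean_space \<Rightarrow> 'a \<Rightarrow> real" where "NN e y = (y \<bullet> e) * rr y"

lemma smk_NN: "smk k (NN e)"
  unfolding NN_def[abs_def] by (rule smk_mult[OF smk_coord smk_rr])

definition D2N :: "'a::euclidean_space \<Rightarrow> 'a \<Rightarrow> 'a \<Rightarrow> real" where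
  "D2N x v w = (v \<bullet> x) * (w \<bullet> x) - v \<bullet> w"

definition D3N :: "'a::euclidean_space \<Rightarrow> 'a \<Rightarrow> 'a \<Rightarrow> 'a \<Rightarrow> real" where
  "D3N x s v w = - 2 * ((w \<bullet> x) * D2N x s v + (v \<bullet> x) * D2N x s w + (s \<bullet> x) * D2N x v w)"

context
  fixes x :: "'a::euclidean_space"
  assumes x1: "norm x = 1"
begin

lemma xS': "x \<in> S0" using x1 by auto

lemma xx: "x \<bullet> x = 1" using x1 by (simp add: dot_square_norm)

lemma NN_x: "NN x x = 1"
  by (simp add: NN_def xx rr_unit[OF x1])

lemma D1_NN: "D1 (NN x) x c = 0"
  unfolding NN_def[abs_def]
  unfolding D1_mult[OF smk_coord smk_rr xS']
  by (simp add: D1_mult[OF smk_coord smk_rr xS'] D1_coord D1_rr[OF xS'] rr_unit[OF x1] xx inner_commute)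


lemma D2_NN: "D2 (NN x) x v w = D2N x v w"
  unfolding NN_def[abs_def] D2N_def
  unfolding D2_mult[OF smk_coord smk_rr xS']
  by (simp add: D2_mult[OF smk_coord smk_rr xS'] D1_coord D2_coord D1_rr[OF xS'] D2_rr[OF xS']
      rr_unit[OF x1] xx inner_commute algebra_simps)


lemma D3_NN: "D3 (NN x) x s v w = D3N x s v w"
  unfolding NN_def[abs_def] D3N_def D2N_def
  unfolding D3_mult[OF smk_coord smk_rr xS']
  by (simp add: D3_mult[OF smk_coord smk_rr xS'] D1_coord D2_coord D3_coord D1_rr[OF xS'] D2_rr[OF xS']
      D3_rr[OF x1] rr_unit[OF x1] xx inner_commute algebra_simps)

end



lemma F1_sum1: "F1 (\<lambda>c. \<Sum>i\<in>I. w i * q i c) r = (\<Sum>i\<in>I. w i * F1 (q i) r)"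
  unfolding F1_def by (simp add: sum_distrib_left sum_distrib_right mult.assoc sum.swap[of _ I])
lemma F1_sum2: "F1 r (\<lambda>c. \<Sum>i\<in>I. w i * q i c) = (\<Sum>i\<in>I. w i * F1 r (q i))"
  unfolding F1_def by (simp add: sum_distrib_left sum_distrib_right algebra_simps sum.swap[of _ I])
lemma TR_sum: "TR (\<lambda>b c. \<Sum>i\<in>I. w i * q i b c) = (\<Sum>i\<in>I. w i * TR (q i))"
  unfolding TR_def by (simp add: sum_distrib_left sum.swap[of _ I])

lemma GHG_sum1: "GHG (\<lambda>c. \<Sum>i\<in>I. w i * q i c) r h = (\<Sum>i\<in>I. w i * GHG (q i) r h)"
  unfolding GHG_def by (simp add: sum_distrib_left sum_distrib_right algebra_simps sum.swap[of _ I])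
lemma GHG_sum2: "GHG r (\<lambda>c. \<Sum>i\<in>I. w i * q i c) h = (\<Sum>i\<in>I. w i * GHG r (q i) h)"
  unfolding GHG_def by (simp add: sum_distrib_left sum_distrib_right algebra_simps sum.swap[of _ I])
lemma GHG_sum3: "GHG r s (\<lambda>b c. \<Sum>i\<in>I. w i * q i b c) = (\<Sum>i\<in>I. w i * GHG r s (q i))"
  unfolding GHG_def by (simp add: sum_distrib_left sum_distrib_right algebra_simps sum.swap[of _ I])
lemma HH_sum1: "HH (\<lambda>b c. \<Sum>i\<in>I. w i * q i b c) k = (\<Sum>i\<in>I. w i * HH (q i) k)"
  unfolding HH_def by (simp add: sum_distrib_left sum_distrib_right algebra_simps sum.swap[of _ I])
lemma HH_sum2: "HH k (\<lambda>b c. \<Sum>i\<in>I. w i * q i b c) = (\<Sum>i\<in>I. w i * HH k (q i))"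
  unfolding HH_def by (simp add: sum_distrib_left sum_distrib_right algebra_simps sum.swap[of _ I])
lemma T1_sum1: "T1 (\<lambda>c. \<Sum>i\<in>I. w i * q i c) T = (\<Sum>i\<in>I. w i * T1 (q i) T)"
  unfolding T1_def by (simp add: sum_distrib_left sum_distrib_right algebra_simps sum.swap[of _ I])
lemma T1_sum2: "T1 p (\<lambda>s v u. \<Sum>i\<in>I. w i * q i s v u) = (\<Sum>i\<in>I. w i * T1 p (q i))"
  unfolding T1_def by (simp add: sum_distrib_left sum_distrib_right algebra_simps sum.swap[of _ I])
lemma T2_sum1: "T2 (\<lambda>c. \<Sum>i\<in>I. w i * q i c) T = (\<Sum>i\<in>I. w i * T2 (q i) T)"
  unfolding T2_def by (simp add: sum_distrib_left sum_distrib_right algebra_simps sum.swap[of _ I])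
lemma T2_sum2: "T2 p (\<lambda>s v u. \<Sum>i\<in>I. w i * q i s v u) = (\<Sum>i\<in>I. w i * T2 p (q i))"
  unfolding T2_def by (simp add: sum_distrib_left sum_distrib_right algebra_simps sum.swap[of _ I])

lemmas form_sum = F1_sum1 F1_sum2 TR_sum GHG_sum1 GHG_sum2 GHG_sum3 HH_sum1 HH_sum2
  T1_sum1 T1_sum2 T2_sum1 T2_sum2

lemma dm1_sum: "dm1 (\<Sum>i\<in>I. w i * va i) (\<lambda>c. \<Sum>i\<in>I. w i * pa i c) (\<lambda>b c. \<Sum>i\<in>I. w i * ha i b c)
    (\<lambda>s v u. \<Sum>i\<in>I. w i * Ta i s v u) v p h T = (\<Sum>i\<in>I. w i * dm1 (va i) (pa i) (ha i) (Ta i) v p h T)"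
  unfolding dm1_def form_sum by (simp add: sum.distrib sum_distrib_left sum_distrib_right algebra_simps)

lemma dm2_sum: "dm2 (\<Sum>i\<in>I. w i * va i) (\<lambda>c. \<Sum>i\<in>I. w i * pa i c) (\<lambda>b c. \<Sum>i\<in>I. w i * ha i b c)
    (\<lambda>s v u. \<Sum>i\<in>I. w i * Ta i s v u) v p h T = (\<Sum>i\<in>I. w i * dm2 (va i) (pa i) (ha i) (Ta i) v p h T)"
  unfolding dm2_def form_sum by (simp add: sum.distrib sum_distrib_left sum_distrib_right algebra_simps)

lemma dm3_sum: "dm3 (\<Sum>i\<in>I. w i * va i) (\<lambda>c. \<Sum>i\<in>I. w i * pa i c) (\<lambda>b c. \<Sum>i\<in>I. w i * ha i b c)
    (\<lambda>s v u. \<Sum>i\<in>I. w i * Ta i s v u) v p h T = (\<Sum>i\<in>I. w i * dm3 (va i) (pa i) (ha i) (Ta i) v p h T)"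
  unfolding dm3_def form_sum by (simp add: sum.distrib sum_distrib_left sum_distrib_right algebra_simps)

lemma dm4_sum: "dm4 (\<Sum>i\<in>I. w i * va i) (\<lambda>c. \<Sum>i\<in>I. w i * pa i c) (\<lambda>b c. \<Sum>i\<in>I. w i * ha i b c)
    (\<lambda>s v u. \<Sum>i\<in>I. w i * Ta i s v u) v p h T = (\<Sum>i\<in>I. w i * dm4 (va i) (pa i) (ha i) (Ta i) v p h T)"
  unfolding dm4_def form_sum by (simp add: sum.distrib sum_distrib_left sum_distrib_right algebra_simps)

lemma dm5_sum: "dm5 (\<Sum>i\<in>I. w i * va i) (\<lambda>c. \<Sum>i\<in>I. w i * pa i c) (\<lambda>b c. \<Sum>i\<in>I. w i * ha i b c)
    (\<lambda>s v u. \<Sum>i\<in>I. w i * Ta i s v u) v p h T = (\<Sum>i\<in>I. w i * dm5 (va i) (pa i) (ha i) (Ta i) v p h T)"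
  unfolding dm5_def form_sum by (simp add: sum.distrib sum_distrib_left sum_distrib_right algebra_simps)

lemma dm6_sum: "dm6 (\<Sum>i\<in>I. w i * va i) (\<lambda>c. \<Sum>i\<in>I. w i * pa i c) (\<lambda>b c. \<Sum>i\<in>I. w i * ha i b c)
    (\<lambda>s v u. \<Sum>i\<in>I. w i * Ta i s v u) v p h T = (\<Sum>i\<in>I. w i * dm6 (va i) (pa i) (ha i) (Ta i) v p h T)"
  unfolding dm6_def form_sum by (simp add: sum.distrib sum_distrib_left sum_distrib_right algebra_simps)

lemma dm7_sum: "dm7 (\<Sum>i\<in>I. w i * va i) (\<lambda>c. \<Sum>i\<in>I. w i * pa i c) (\<lambda>b c. \<Sum>i\<in>I. w i * ha i b c)
    (\<lambda>s v u. \<Sum>i\<in>I. w i * Ta i s v u) v p h T = (\<Sum>i\<in>I. w i * dm7 (va i) (pa i) (ha i) (Ta i) v p h T)"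
  unfolding dm7_def form_sum by (simp add: sum.distrib sum_distrib_left sum_distrib_right algebra_simps)

lemma dm8_sum: "dm8 (\<Sum>i\<in>I. w i * va i) (\<lambda>c. \<Sum>i\<in>I. w i * pa i c) (\<lambda>b c. \<Sum>i\<in>I. w i * ha i b c)
    (\<lambda>s v u. \<Sum>i\<in>I. w i * Ta i s v u) v p h T = (\<Sum>i\<in>I. w i * dm8 (va i) (pa i) (ha i) (Ta i) v p h T)"
  unfolding dm8_def form_sum by (simp add: sum.distrib sum_distrib_left sum_distrib_right algebra_simps)

lemma dm9_sum: "dm9 (\<Sum>i\<in>I. w i * va i) (\<lambda>c. \<Sum>i\<in>I. w i * pa i c) (\<lambda>b c. \<Sum>i\<in>I. w i * ha i b c)
    (\<lambda>s v u. \<Sum>i\<in>I. w i * Ta i s v u) v p h T = (\<Sum>i\<in>I. w i * dm9 (va i) (pa i) (ha i) (Ta i) v p h T)"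
  unfolding dm9_def form_sum by (simp add: sum.distrib sum_distrib_left sum_distrib_right algebra_simps)

lemma DPsiG_sum: "DPsiG a b c E (\<Sum>i\<in>I. w i * va i) (\<lambda>c. \<Sum>i\<in>I. w i * pa i c) (\<lambda>b c. \<Sum>i\<in>I. w i * ha i b c)
    (\<lambda>s v u. \<Sum>i\<in>I. w i * Ta i s v u) v p h T = (\<Sum>i\<in>I. w i * DPsiG a b c E (va i) (pa i) (ha i) (Ta i) v p h T)"
  unfolding DPsiG_def dm1_sum dm2_sum dm3_sum dm4_sum dm5_sum dm6_sum dm7_sum dm8_sum dm9_sum
  by (simp add: sum.distrib sum_distrib_left sum_subtractf sum_divide_distrib algebra_simps)

lemma DPsi_sum: "DPsi d n (\<Sum>i\<in>I. w i * va i) (\<lambda>c. \<Sum>i\<in>I. w i * pa i c) (\<lambda>b c. \<Sum>i\<in>I. w i * ha i b c)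
    (\<lambda>s v u. \<Sum>i\<in>I. w i * Ta i s v u) v p h T = (\<Sum>i\<in>I. w i * DPsi d n (va i) (pa i) (ha i) (Ta i) v p h T)"
  unfolding DPsi_G by (rule DPsiG_sum)



definition TK :: "('a::euclidean_space \<Rightarrow> real) \<Rightarrow> 'a \<Rightarrow> 'a \<Rightarrow> 'a \<Rightarrow> 'a \<Rightarrow> real" where
  "TK U x s b c = U x * D3N x s b c + D2N x b c * D1 U x s + D2N x s c * D1 U x b + D2N x s b * D1 U x c"

context
  fixes U :: "'a::euclidean_space \<Rightarrow> real" and x :: 'a
  assumes smU: "\<And>k. smk k U" and homU: "homog0 U" and x1: "norm x = 1"
begin

lemma xS9: "x \<in> S0" using x1 by auto

lemma eu1: "(\<Sum>b\<in>Basis. (b \<bullet> x) * D1 U x b) = 0"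
  using euler1_sum[OF smU homU xS9] by (simp add: inner_commute)

lemma eu2: "(\<Sum>b\<in>Basis. (b \<bullet> x) * D2 U x b c) = - D1 U x c"
  using euler2_sum[OF smU homU xS9] by (simp add: inner_commute)

lemma sxx: "(\<Sum>b\<in>Basis. (b \<bullet> x) * (b \<bullet> x)) = 1"
  using sum_inner_basis[of x x] xx[OF x1] by (simp add: inner_commute)

lemma sbx: "(\<Sum>b\<in>Basis. (b \<bullet> x) * (b \<bullet> c)) = x \<bullet> c"
  using sum_inner_basis[of x c] by (simp add: inner_commute)

lemma sD2N_diag: "(\<Sum>b\<in>Basis. D2N x b b) = 1 - real DIM('a)"
proof -
  have "(\<Sum>b\<in>Basis. D2N x b b) = (\<Sum>b\<in>Basis. (b \<bullet> x) * (b \<bullet> x)) - (\<Sum>b\<in>(Basis::'a set). 1)"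
    by (simp add: D2N_def sum_subtractf)
  then show ?thesis using sxx by simp
qed

lemma sD2N_x: "(\<Sum>b\<in>Basis. (b \<bullet> x) * D2N x b c) = 0"
proof -
  have "(\<Sum>b\<in>Basis. (b \<bullet> x) * D2N x b c) = (c \<bullet> x) * (\<Sum>b\<in>Basis. (b \<bullet> x) * (b \<bullet> x)) - (\<Sum>b\<in>Basis. (b \<bullet> x) * (b \<bullet> c))"
    by (simp add: D2N_def sum_subtractf sum_distrib_left algebra_simps)
  then show ?thesis using sxx sbx by (simp add: inner_commute)
qed

lemma sD2N_x2: "(\<Sum>b\<in>Basis. (b \<bullet> x) * D2N x c b) = 0"
  using sD2N_x[of c] by (simp add: D2N_def mult.commute inner_commute)

lemma sD2N_p: "c \<in> Basis \<Longrightarrow> (\<Sum>b\<in>Basis. D2N x b c * D1 U x b) = - D1 U x c"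
proof -
  assume c: "c \<in> Basis"
  have "(\<Sum>b\<in>Basis. D2N x b c * D1 U x b) = (c \<bullet> x) * (\<Sum>b\<in>Basis. (b \<bullet> x) * D1 U x b) - (\<Sum>b\<in>Basis. D1 U x b * (b \<bullet> c))"
    by (simp add: D2N_def sum_subtractf sum_distrib_left algebra_simps)
  then show ?thesis using eu1 basis_delta(1)[OF c] by simp
qed

lemma sD2N_p2: "c \<in> Basis \<Longrightarrow> (\<Sum>b\<in>Basis. D2N x c b * D1 U x b) = - D1 U x c"
  using sD2N_p[of c] by (simp add: D2N_def mult.commute inner_commute)

lemma sD3N_1: "(\<Sum>b\<in>Basis. D3N x b b c) = - 2 * (1 - real DIM('a)) * (c \<bullet> x)"
proof -
  have "(\<Sum>b\<in>Basis. D3N x b b c) = - 2 * ((c \<bullet> x) * (\<Sum>b\<in>Basis. D2N x b b)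
      + 2 * (\<Sum>b\<in>Basis. (b \<bullet> x) * D2N x b c))"
    by (simp add: D3N_def sum.distrib sum_subtractf sum_negf sum_distrib_left algebra_simps)
  then show ?thesis using sD2N_diag sD2N_x by (simp add: algebra_simps)
qed

lemma sD3N_2: "(\<Sum>b\<in>Basis. D3N x c b b) = - 2 * (1 - real DIM('a)) * (c \<bullet> x)"
proof -
  have "(\<Sum>b\<in>Basis. D3N x c b b) = - 2 * ((c \<bullet> x) * (\<Sum>b\<in>Basis. D2N x b b)
      + 2 * (\<Sum>b\<in>Basis. (b \<bullet> x) * D2N x c b))"
    by (simp add: D3N_def sum.distrib sum_subtractf sum_negf sum_distrib_left algebra_simps)
  then show ?thesis using sD2N_diag sD2N_x2 by (simp add: algebra_simps)
qed

lemma k1: "GHG (D1 U x) (D1 U x) (\<lambda>b c. U x * D2N x b c) = - U x * F1 (D1 U x) (D1 U x)"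
proof -
  have "GHG (D1 U x) (D1 U x) (\<lambda>b c. U x * D2N x b c)
      = U x * (\<Sum>b\<in>Basis. D1 U x b * (\<Sum>c\<in>Basis. D2N x b c * D1 U x c))"
    by (simp add: GHG_def sum_distrib_left algebra_simps)
  also have "\<dots> = U x * (\<Sum>b\<in>Basis. D1 U x b * (- D1 U x b))"
    by (simp add: sD2N_p2)
  finally show ?thesis by (simp add: F1_def sum_negf)
qed

lemma k2: "TR (\<lambda>b c. U x * D2N x b c) = U x * (1 - real DIM('a))"
  using sD2N_diag by (simp add: TR_def sum_distrib_left[symmetric])

lemma k3: "HH (\<lambda>b c. U x * D2N x b c) (D2 U x) = - U x * TR (D2 U x)"
proof -
  have "HH (\<lambda>b c. U x * D2N x b c) (D2 U x)
      = U x * (\<Sum>c\<in>Basis. (c \<bullet> x) * (\<Sum>b\<in>Basis. (b \<bullet> x) * D2 U x b c) - D2 U x c c)"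
  proof -
    have "HH (\<lambda>b c. U x * D2N x b c) (D2 U x) = U x * (\<Sum>c\<in>Basis. \<Sum>b\<in>Basis. D2N x b c * D2 U x b c)"
      unfolding HH_def sum_distrib_left by (subst sum.swap) (simp add: algebra_simps)
    also have "\<dots> = U x * (\<Sum>c\<in>Basis. (c \<bullet> x) * (\<Sum>b\<in>Basis. (b \<bullet> x) * D2 U x b c) - D2 U x c c)"
    proof -
      have "(\<Sum>b\<in>Basis. D2N x b c * D2 U x b c) = (c \<bullet> x) * (\<Sum>b\<in>Basis. (b \<bullet> x) * D2 U x b c) - D2 U x c c"
        if c: "c \<in> Basis" for c
        using basis_delta(3)[OF c, of "\<lambda>b. D2 U x b c"]
        by (simp add: D2N_def sum_subtractf sum_distrib_left algebra_simps inner_commute)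
      then show ?thesis by (simp cong: sum.cong)
    qed
    finally show ?thesis .
  qed
  also have "\<dots> = U x * (\<Sum>c\<in>Basis. (c \<bullet> x) * (- D1 U x c) - D2 U x c c)"
    by (simp add: eu2)
  also have "\<dots> = - U x * TR (D2 U x)"
    using eu1 by (simp add: TR_def sum_subtractf sum_negf algebra_simps)
  finally show ?thesis .
qed

lemma k4: "HH (D2 U x) (\<lambda>b c. U x * D2N x b c) = - U x * TR (D2 U x)"
  using k3 by (simp add: HH_def mult.commute)


lemma k5: "T1 (D1 U x) (TK U x) = - (real DIM('a) + 1) * F1 (D1 U x) (D1 U x)"
proof -
  have "(\<Sum>b\<in>Basis. TK U x b b c) = U x * (- 2 * (1 - real DIM('a)) * (c \<bullet> x)) + (- 2 * D1 U x c)
     + (1 - real DIM('a)) * D1 U x c" if c: "c \<in> Basis" for c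
  proof -
    have "(\<Sum>b\<in>Basis. TK U x b b c) = U x * (\<Sum>b\<in>Basis. D3N x b b c) + 2 * (\<Sum>b\<in>Basis. D2N x b c * D1 U x b)
       + (\<Sum>b\<in>Basis. D2N x b b) * D1 U x c"
      by (simp add: TK_def sum.distrib sum_distrib_left sum_distrib_right algebra_simps)
    then show ?thesis using sD3N_1 sD2N_p[OF c] sD2N_diag by simp
  qed
  then have "T1 (D1 U x) (TK U x) = (\<Sum>c\<in>Basis. D1 U x c * (U x * (- 2 * (1 - real DIM('a)) * (c \<bullet> x)) + (- 2 * D1 U x c)
     + (1 - real DIM('a)) * D1 U x c))"
    unfolding T1_def by (simp cong: sum.cong)
  also have "\<dots> = (U x * (- 2 * (1 - real DIM('a)))) * (\<Sum>c\<in>Basis. (c \<bullet> x) * D1 U x c)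
      - (real DIM('a) + 1) * F1 (D1 U x) (D1 U x)"
    by (simp add: F1_def sum.distrib sum_subtractf sum_negf sum_distrib_left algebra_simps)
  finally show ?thesis using eu1 by (simp add: algebra_simps)
qed

lemma k6: "T2 (D1 U x) (TK U x) = - (real DIM('a) + 1) * F1 (D1 U x) (D1 U x)"
proof -
  have "(\<Sum>b\<in>Basis. TK U x c b b) = U x * (- 2 * (1 - real DIM('a)) * (c \<bullet> x)) + (- 2 * D1 U x c)
     + (1 - real DIM('a)) * D1 U x c" if c: "c \<in> Basis" for c
  proof -
    have "(\<Sum>b\<in>Basis. TK U x c b b) = U x * (\<Sum>b\<in>Basis. D3N x c b b) + 2 * (\<Sum>b\<in>Basis. D2N x c b * D1 U x b)
       + (\<Sum>b\<in>Basis. D2N x b b) * D1 U x c"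
      by (simp add: TK_def sum.distrib sum_distrib_left sum_distrib_right algebra_simps)
    then show ?thesis using sD3N_2 sD2N_p2[OF c] sD2N_diag by simp
  qed
  then have "T2 (D1 U x) (TK U x) = (\<Sum>c\<in>Basis. D1 U x c * (U x * (- 2 * (1 - real DIM('a)) * (c \<bullet> x)) + (- 2 * D1 U x c)
     + (1 - real DIM('a)) * D1 U x c))"
    unfolding T2_def by (simp cong: sum.cong)
  also have "\<dots> = (U x * (- 2 * (1 - real DIM('a)))) * (\<Sum>c\<in>Basis. (c \<bullet> x) * D1 U x c)
      - (real DIM('a) + 1) * F1 (D1 U x) (D1 U x)"
    by (simp add: F1_def sum.distrib sum_subtractf sum_negf sum_distrib_left algebra_simps)
  finally show ?thesis using eu1 by (simp add: algebra_simps)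
qed

end



context
  fixes U :: "'a::euclidean_space \<Rightarrow> real" and x :: 'a
  assumes smU: "\<And>k. smk k U" and homU: "homog0 U" and x1: "norm x = 1"
begin

lemma xS10: "x \<in> S0" using x1 by auto

lemma Phi1: "D1 (\<lambda>y. NN x y * U y) x = D1 U x"
  by (rule ext) (simp add: D1_mult[OF smk_NN smU xS10] D1_NN[OF x1] NN_x[OF x1])

lemma Phi2: "D2 (\<lambda>y. NN x y * U y) x = (\<lambda>b c. D2 U x b c + U x * D2N x b c)"
  by (rule ext, rule ext) (simp add: D2_mult[OF smk_NN smU xS10] D1_NN[OF x1] NN_x[OF x1] D2_NN[OF x1])

lemma Phi3: "D3 (\<lambda>y. NN x y * U y) x = (\<lambda>s b c. D3 U x s b c + TK U x s b c)"
  apply (rule ext, rule ext, rule ext)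
  unfolding D3_mult[OF smk_NN smU xS10]
  by (simp add: D1_NN[OF x1] NN_x[OF x1] D2_NN[OF x1] D3_NN[OF x1] TK_def algebra_simps)

lemma final_alg:
  assumes d: "real DIM('a) = n + 1"
  shows "DPsi (real DIM('a)) n (U x) (D1 U x) (\<lambda>b c. D2 U x b c + U x * D2N x b c)
      (\<lambda>s b c. D3 U x s b c + TK U x s b c) (U x) (D1 U x) (D2 U x) (D3 U x) / 3
    - Psi (real DIM('a)) n (U x) (D1 U x) (D2 U x) (D3 U x)
   = (n - 1) / 3 * U x * (- (n - 4) / 8 * (2 * F1 (D1 U x) (D1 U x) + 2 * U x * TR (D2 U x))
        - F1 (D1 U x) (D1 U x) + n / 2 * ((n - 4) / 4)\<^sup>2 * (U x)\<^sup>2)"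
  unfolding DPsi_G DPsiG_def dm1_def dm2_def dm3_def dm4_def dm5_def dm6_def dm7_def dm8_def dm9_def
  unfolding form_add k1[OF smU homU x1] k2[OF smU homU x1] k3[OF smU homU x1] k4[OF smU homU x1]
  unfolding k5[OF smU homU x1] k6[OF smU homU x1]
  unfolding Psi_def d
  by (simp add: field_simps power2_eq_square power3_eq_cube)

end



lemma jet_add1:
  assumes "\<And>k. smk k F" "\<And>k. smk k G" "y \<in> S0"
  shows "D1 (\<lambda>z. F z + G z) y = (\<lambda>c. D1 F y c + D1 G y c)"
  by (rule ext) (rule D1_add[OF assms])

lemma jet_add2:
  assumes "\<And>k. smk k F" "\<And>k. smk k G" "y \<in> S0"
  shows "D2 (\<lambda>z. F z + G z) y = (\<lambda>b c. D2 F y b c + D2 G y b c)"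
  by (rule ext, rule ext) (rule D2_add[OF assms])

lemma jet_add3:
  assumes "\<And>k. smk k F" "\<And>k. smk k G" "y \<in> S0"
  shows "D3 (\<lambda>z. F z + G z) y = (\<lambda>s b c. D3 F y s b c + D3 G y s b c)"
  by (rule ext, rule ext, rule ext) (rule D3_add[OF assms])

lemma hext_lin1: "hext (\<lambda>y. (y \<bullet> b) * u y) = (\<lambda>y. NN b y * hext u y)"
  unfolding hext_def NN_def rr_def by (simp add: fun_eq_iff divide_inverse algebra_simps)

lemma Lsig2_DPsi:
  fixes u :: "'a::euclidean_space \<Rightarrow> real"
  assumes smU: "\<And>k. smk k (hext u)" and x1: "norm x = 1"
  shows "Lsig2 n (\<lambda>y. (y \<bullet> b) * u y) u u x =
    DPsi (real DIM('a)) n (NN b x * hext u x) (D1 (\<lambda>y. NN b y * hext u y) x) (D2 (\<lambda>y. NN b y * hext u y) x)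
      (D3 (\<lambda>y. NN b y * hext u y) x) (hext u x) (D1 (hext u) x) (D2 (hext u) x) (D3 (hext u) x) / 3"
proof -
  have xS: "x \<in> S0" using x1 by auto
  define U where "U = hext u"
  define A where "A = (\<lambda>y. NN b y * U y)"
  have sU: "smk k U" for k unfolding U_def by (rule smU)
  have sA: "smk k A" for k unfolding A_def by (rule smk_mult[OF smk_NN sU])
  have sAU: "smk k (\<lambda>y. A y + U y)" for k by (rule smk_add[OF sA sU])
  have sAUU: "smk k (\<lambda>y. A y + U y + U y)" for k by (rule smk_add[OF sAU sU])
  have sUU: "smk k (\<lambda>y. U y + U y)" for k by (rule smk_add[OF sU sU])
  have h1: "hext (\<lambda>y. (y \<bullet> b) * u y + u y + u y) = (\<lambda>y. A y + U y + U y)"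
    using hext_lin1[of b u] unfolding A_def U_def by (simp add: hext_def fun_eq_iff)
  have h2: "hext (\<lambda>y. (y \<bullet> b) * u y + u y) = (\<lambda>y. A y + U y)"
    using hext_lin1[of b u] unfolding A_def U_def by (simp add: hext_def fun_eq_iff)
  have h4: "hext (\<lambda>y. u y + u y) = (\<lambda>y. U y + U y)"
    unfolding U_def by (simp add: hext_def fun_eq_iff)
  have h5: "hext (\<lambda>y. (y \<bullet> b) * u y) = A"
    using hext_lin1[of b u] unfolding A_def U_def .
  have ux: "u x = U x" unfolding U_def by (simp add: hext_unit[OF x1])
  have Ax: "A x = (x \<bullet> b) * u x" unfolding A_def NN_def by (simp add: rr_unit[OF x1] ux)
  have Ax': "(x \<bullet> b) * U x = A x" using Ax ux by simp
  have L1: "Lsig2_diag n (\<lambda>y. (y \<bullet> b) * u y + u y + u y) x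
     = Psi (real DIM('a)) n (A x + U x + U x) (\<lambda>c. D1 A x c + D1 U x c + D1 U x c)
        (\<lambda>b c. D2 A x b c + D2 U x b c + D2 U x b c) (\<lambda>s v w. D3 A x s v w + D3 U x s v w + D3 U x s v w)"
    using Lsig2_diag_Psi[of "\<lambda>y. (y \<bullet> b) * u y + u y + u y" x n, unfolded h1, OF sAUU x1]
    unfolding jet_add1[OF sAU sU xS] jet_add1[OF sA sU xS] jet_add2[OF sAU sU xS] jet_add2[OF sA sU xS]
        jet_add3[OF sAU sU xS] jet_add3[OF sA sU xS] ux Ax'
    by assumption
  have L2: "Lsig2_diag n (\<lambda>y. (y \<bullet> b) * u y + u y) x
     = Psi (real DIM('a)) n (A x + U x) (\<lambda>c. D1 A x c + D1 U x c)
        (\<lambda>b c. D2 A x b c + D2 U x b c) (\<lambda>s v w. D3 A x s v w + D3 U x s v w)"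
    using Lsig2_diag_Psi[of "\<lambda>y. (y \<bullet> b) * u y + u y" x n, unfolded h2, OF sAU x1]
    by (simp add: jet_add1[OF sA sU xS] jet_add2[OF sA sU xS] jet_add3[OF sA sU xS] Ax ux)
  have L4: "Lsig2_diag n (\<lambda>y. u y + u y) x
     = Psi (real DIM('a)) n (U x + U x) (\<lambda>c. D1 U x c + D1 U x c)
        (\<lambda>b c. D2 U x b c + D2 U x b c) (\<lambda>s v w. D3 U x s v w + D3 U x s v w)"
    using Lsig2_diag_Psi[of "\<lambda>y. u y + u y" x n, unfolded h4, OF sUU x1]
    unfolding jet_add1[OF sU sU xS] jet_add2[OF sU sU xS] jet_add3[OF sU sU xS] ux
    by assumption
  have L5: "Lsig2_diag n (\<lambda>y. (y \<bullet> b) * u y) x = Psi (real DIM('a)) n (A x) (D1 A x) (D2 A x) (D3 A x)"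
    using Lsig2_diag_Psi[of "\<lambda>y. (y \<bullet> b) * u y" x n, unfolded h5, OF sA x1]
    by (simp add: Ax)
  have L6: "Lsig2_diag n u x = Psi (real DIM('a)) n (U x) (D1 U x) (D2 U x) (D3 U x)"
    using Lsig2_diag_Psi[of u x n, OF smU x1] by (simp add: U_def ux)
  have "Lsig2 n (\<lambda>y. (y \<bullet> b) * u y) u u x = DPsi (real DIM('a)) n (A x) (D1 A x) (D2 A x) (D3 A x)
      (U x) (D1 U x) (D2 U x) (D3 U x) / 3"
    unfolding Lsig2_def L1 L2 L4 L5 L6 by (rule polar)
  then show ?thesis unfolding A_def U_def .
qed



lemma Phi_fun: "(\<lambda>y. \<Sum>b\<in>Basis. (x \<bullet> b) * (NN b y * U y)) = (\<lambda>y. NN x y * U y)"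
proof
  fix y
  have "(\<Sum>b\<in>Basis. (x \<bullet> b) * (NN b y * U y)) = (\<Sum>b\<in>Basis. (y \<bullet> b) * (x \<bullet> b)) * rr y * U y"
    by (simp add: NN_def sum_distrib_left sum_distrib_right algebra_simps)
  also have "\<dots> = NN x y * U y" by (simp add: sum_inner_basis NN_def)
  finally show "(\<Sum>b\<in>Basis. (x \<bullet> b) * (NN b y * U y)) = NN x y * U y" .
qed

theorem theorem1p4:
  fixes u :: "'a::euclidean_space \<Rightarrow> real" and x :: 'a
  assumes "DIM('a) \<ge> 4"
    and "smooth_sphere_fun u"
    and "norm x = 1"
  shows "(\<Sum>b\<in>Basis. (x \<bullet> b) *
            (Lsig2 (real (DIM('a) - 1)) (\<lambda>y. (y \<bullet> b) * u y) u u x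
             - (x \<bullet> b) * Lsig2_diag (real (DIM('a) - 1)) u x))
         = (real (DIM('a) - 1) - 1) / 3 * u x * sigma1 (real (DIM('a) - 1)) u x"
proof -
  define n where "n = real (DIM('a) - 1)"
  define U where "U = hext u"
  have x1: "norm x = 1" by (rule assms(3))
  have xS: "x \<in> S0" using x1 by auto
  have smu: "smk k (hext u)" for k using assms(2) smooth_smk unfolding smooth_sphere_fun_def by blast
  have smU: "smk k U" for k unfolding U_def by (rule smu)
  have homU: "homog0 U" unfolding U_def by (rule homog0_hext)
  have d: "real DIM('a) = n + 1" using assms(1) unfolding n_def by (simp add: of_nat_diff)
  have ux: "u x = U x" unfolding U_def by (simp add: hext_unit[OF x1])
  let ?A = "\<lambda>b y. NN b y * U y"
  let ?DP = "\<lambda>b. DPsi (real DIM('a)) n (?A b x) (D1 (?A b) x) (D2 (?A b) x) (D3 (?A b) x)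
      (U x) (D1 U x) (D2 U x) (D3 U x)"
  let ?P = "Psi (real DIM('a)) n (U x) (D1 U x) (D2 U x) (D3 U x)"
  have perb: "Lsig2 n (\<lambda>y. (y \<bullet> b) * u y) u u x = ?DP b / 3" for b
    using Lsig2_DPsi[OF smu x1, of n b] unfolding U_def .
  have L6: "Lsig2_diag n u x = ?P"
    using Lsig2_diag_Psi[of u x n, OF smu x1] by (simp add: U_def ux)
  have sAb: "smk k (\<lambda>y. (x \<bullet> b) * ?A b y)" for k b by (rule smk_cmult[OF smk_mult[OF smk_NN smU]])
  have sA: "smk k (?A b)" for k b by (rule smk_mult[OF smk_NN smU])
  have e0: "(\<Sum>b\<in>Basis. (x \<bullet> b) * ?A b x) = U x"
    using fun_cong[OF Phi_fun[of x U], of x] by (simp add: NN_x[OF x1])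
  have e1: "(\<lambda>c. \<Sum>b\<in>Basis. (x \<bullet> b) * D1 (?A b) x c) = D1 U x"
  proof
    fix c
    have "(\<Sum>b\<in>Basis. (x \<bullet> b) * D1 (?A b) x c) = D1 (\<lambda>y. \<Sum>b\<in>Basis. (x \<bullet> b) * ?A b y) x c"
      by (simp add: D1_sum[OF finite_Basis sAb xS] D1_cmult[OF sA xS])
    also have "\<dots> = D1 U x c" unfolding Phi_fun Phi1[OF smU homU x1] ..
    finally show "(\<Sum>b\<in>Basis. (x \<bullet> b) * D1 (?A b) x c) = D1 U x c" .
  qed
  have e2: "(\<lambda>b' c. \<Sum>b\<in>Basis. (x \<bullet> b) * D2 (?A b) x b' c) = (\<lambda>b c. D2 U x b c + U x * D2N x b c)"
  proof (rule ext, rule ext)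
    fix b' c
    have "(\<Sum>b\<in>Basis. (x \<bullet> b) * D2 (?A b) x b' c) = D2 (\<lambda>y. \<Sum>b\<in>Basis. (x \<bullet> b) * ?A b y) x b' c"
      by (simp add: D2_sum[OF finite_Basis sAb xS] D2_cmult[OF sA xS])
    also have "\<dots> = D2 U x b' c + U x * D2N x b' c" unfolding Phi_fun Phi2[OF smU homU x1] ..
    finally show "(\<Sum>b\<in>Basis. (x \<bullet> b) * D2 (?A b) x b' c) = D2 U x b' c + U x * D2N x b' c" .
  qed
  have e3: "(\<lambda>s b' c. \<Sum>b\<in>Basis. (x \<bullet> b) * D3 (?A b) x s b' c) = (\<lambda>s b c. D3 U x s b c + TK U x s b c)"
  proof (rule ext, rule ext, rule ext)
    fix s b' c
    have "(\<Sum>b\<in>Basis. (x \<bullet> b) * D3 (?A b) x s b' c) = D3 (\<lambda>y. \<Sum>b\<in>Basis. (x \<bullet> b) * ?A b y) x s b' c"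
      by (simp add: D3_sum[OF finite_Basis sAb xS] D3_cmult[OF sA xS])
    also have "\<dots> = D3 U x s b' c + TK U x s b' c" unfolding Phi_fun Phi3[OF smU homU x1] ..
    finally show "(\<Sum>b\<in>Basis. (x \<bullet> b) * D3 (?A b) x s b' c) = D3 U x s b' c + TK U x s b' c" .
  qed
  have sumDP: "(\<Sum>b\<in>Basis. (x \<bullet> b) * ?DP b) = DPsi (real DIM('a)) n (U x) (D1 U x)
      (\<lambda>b c. D2 U x b c + U x * D2N x b c) (\<lambda>s b c. D3 U x s b c + TK U x s b c)
      (U x) (D1 U x) (D2 U x) (D3 U x)"
    using DPsi_sum[of "real DIM('a)" n "\<lambda>b. x \<bullet> b" "\<lambda>b. ?A b x" Basis "\<lambda>b. D1 (?A b) x"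
        "\<lambda>b. D2 (?A b) x" "\<lambda>b. D3 (?A b) x" "U x" "D1 U x" "D2 U x" "D3 U x"]
    unfolding e0 e1 e2 e3 by simp
  have "(\<Sum>b\<in>Basis. (x \<bullet> b) * (Lsig2 n (\<lambda>y. (y \<bullet> b) * u y) u u x - (x \<bullet> b) * Lsig2_diag n u x))
      = (\<Sum>b\<in>Basis. (x \<bullet> b) * ?DP b) / 3 - (\<Sum>b\<in>Basis. (x \<bullet> b) * (x \<bullet> b)) * ?P"
    unfolding perb L6 by (simp add: sum_subtractf sum_divide_distrib sum_distrib_right algebra_simps)
  also have "(\<Sum>b\<in>Basis. (x \<bullet> b) * (x \<bullet> b)) = 1"
    using sum_inner_basis[of x x] xx[OF x1] by simp
  also note sumDP
  also have "DPsi (real DIM('a)) n (U x) (D1 U x)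
      (\<lambda>b c. D2 U x b c + U x * D2N x b c) (\<lambda>s b c. D3 U x s b c + TK U x s b c)
      (U x) (D1 U x) (D2 U x) (D3 U x) / 3 - 1 * ?P
     = (n - 1) / 3 * U x * (- (n - 4) / 8 * (2 * F1 (D1 U x) (D1 U x) + 2 * U x * TR (D2 U x))
        - F1 (D1 U x) (D1 U x) + n / 2 * ((n - 4) / 4)\<^sup>2 * (U x)\<^sup>2)"
    using final_alg[OF smU homU x1 d] by simp
  also have "\<dots> = (n - 1) / 3 * u x * sigma1 n u x"
  proof -
    have s1: "slap (\<lambda>y. (u y)\<^sup>2) x = 2 * F1 (D1 U x) (D1 U x) + 2 * U x * TR (D2 U x)"
      using C4[OF smu x1] unfolding U_def .
    have s2: "(norm (sgrad u x))\<^sup>2 = F1 (D1 U x) (D1 U x)"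
      by (simp add: sgrad_gv gv_def power2_norm_eq_inner inner_vsum_vsum F1_def U_def)
    show ?thesis unfolding sigma1_def s1 s2 ux ..
  qed
  finally show ?thesis unfolding n_def .
qed


end
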